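(* Let $T,T'$ be tiling classes, $\mathcal N$ an approximating sub-almost-groupoid of $\mathcal M_{II}$, and $\hat\varphi:\mathcal N\to\mathcal M'_{II}$ a map which preserves composability, commutes with the inverse map, and satisfies (1) $\hat\varphi(c)\hat\varphi(c')\preceq\hat\varphi(cc')$ for all composable $c,c'\in\mathcal N$, and (2) there is $t>0$ such that $|\mathrm{rad}(\hat\varphi(u))-t\,\mathrm{rad}(u)|$ is a bounded function on the units. Then $\varphi[\lim u_\nu,c]_{\mathcal N}:=[\lim\hat\varphi(u_\nu),\hat\varphi(c)]$ is well defined and defines a (continuous) groupoid homomorphism $\varphi:\mathcal R_{\mathcal N}\to\mathcal R'$.
   Context: Tilings (finite local complexity): a $d$-dimensional tiling is a countable family of bounded closed subsets of $\mathbb R^d$ (tiles, closures of interiors, finitely many decorations) covering $\mathbb R^d$, overlapping only at boundaries, up to translation; finitely many classes of pairs of touching tiles. $\mathcal M_{II}$ ($\mathcal M'_{II}$ for $T'$): doubly pointed pattern classes $M_{xy}$; $M_{x_1x_2}\preceq N_{y_1y_2}$ if $N$ contains a translate of $M$ with $x_i$ on $y_i$; $c\vdash c'$ if some $L_{z_1z_2}$ and tile $z$ of $L$ satisfy $c\preceq L_{z_1z}$, $c'\preceq L_{zz_2}$, with $cc'$ the minimal such $L_{z_1z_2}$; $(M_{xy})^{-1}=M_{yx}$; units $M_{xx}$; $L(c)=cc^{-1}$, $R(c)=c^{-1}c$; $\mathrm{rad}(u)$ the largest $r$ such that $u$ covers all $r$-balls centred in its pointed tile. A sub-almost-groupoid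 is a subset closed under inverses and products of composable elements. Hull $\Omega$: completion of pointed tilings $T_x$ under $d(\omega,\omega')=e^{-\sup\{r:M_r(\omega)=M_r(\omega')\}}$ ($M_r(\omega)$ the smallest pointed pattern around the pointed tile covering all $r$-balls centred in it). An approximating sequence is a sequence of units $u_\nu$ with $u_1\cdots u_k\vdash u_{k+1}$ for all $k$ and $\mathrm{rad}(u_\nu)\to\infty$; $\lim u_\nu$ is the pointed tiling containing all $u_\nu$ at its pointed tile. $u\preceq\omega$ if $u$ occurs at $\omega$'s pointed tile; $U_u=\{\omega:u\preceq\omega\}$; $\omega\cdot c$ the pointed tiling with pointer moved along $c$ ($L(c)\preceq\omega$). $\Omega_{\mathcal N}=\bigcup_{c\in\mathcal N}U_{R(c)}$; $\mathcal N$ approximating: every $\omega\in\Omega_{\mathcal N}$ is the limit of an approximating sequence in $\mathcal N$. $\mathcal R'$: classes $[\omega,c]$ ($L(c)\preceq\omega$) where $(\omega,c)\sim(\omega,c')$ iff some unit $u\preceq\omega$ has $uc=uc'$, product $[\omega,c][\omega\cdot c,c']=[\omega,cc']$, inverse $[\omega\cdot c,c^{-1}]$, topology generated by $\{[\omega,c]:L(c)\preceq\omega\}$. $\mathcal R_{\mathcal N}$: the classes $[\omega,c]_{\mathcal N}$ with $\omega\in\Omega_{\mathcal N}$, $c\in\mathcal N$, $L(c)\preceq\omega$ under the same equivalence restricted to $c\in\mathcal N$, with the analogous groupoid structure and quotient topology. *)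

theory Defs
  imports "HOL-Analysis.Analysis" "HOL-Library.Extended_Real"
begin

text \<open>A tile is a subset of R^d (d = CARD('n)) together with a decoration label.\<close>
type_synonym ('n,'l) tile = "(real^'n) set \<times> 'l"
text \<open>Doubly pointed pattern (M, x, y) with x, y tiles of M.\<close>
type_synonym ('n,'l) dpat = "('n,'l) tile set \<times> ('n,'l) tile \<times> ('n,'l) tile"
text \<open>Pointed tiling / pointed pattern (S, p) with p a tile of S.\<close>
type_synonym ('n,'l) ptil = "('n,'l) tile set \<times> ('n,'l) tile"

definition tile_tr :: "real^'n::finite \<Rightarrow> ('n,'l) tile \<Rightarrow> ('n,'l) tile" where
  "tile_tr a t = ((\<lambda>x. a + x) ` fst t, snd t)"

definition pat_tr :: "real^'n::finite \<Rightarrow> ('n,'l) tile set \<Rightarrow> ('n,'l) tile set" where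
  "pat_tr a P = tile_tr a ` P"

definition is_tiling :: "('n::finite,'l) tile set \<Rightarrow> bool" where
  "is_tiling T \<longleftrightarrow>
     countable T \<and>
     (\<forall>t\<in>T. bounded (fst t) \<and> closed (fst t) \<and> fst t \<noteq> {} \<and> closure (interior (fst t)) = fst t) \<and>
     \<Union>(fst ` T) = UNIV \<and>
     (\<forall>t\<in>T. \<forall>t'\<in>T. t \<noteq> t' \<longrightarrow> interior (fst t) \<inter> interior (fst t') = {}) \<and>
     (\<exists>F. finite F \<and> (\<forall>t\<in>T. \<forall>t'\<in>T. t \<noteq> t' \<and> fst t \<inter> fst t' \<noteq> {} \<longrightarrow>
             (\<exists>(s,s')\<in>F. \<exists>a. t = tile_tr a s \<and> t' = tile_tr a s')))"

definition dp_tr :: "real^'n::finite \<Rightarrow> ('n,'l) dpat \<Rightarrow> ('n,'l) dpat" where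
  "dp_tr a p = (case p of (M,x,y) \<Rightarrow> (pat_tr a M, tile_tr a x, tile_tr a y))"

definition dpclass :: "('n::finite,'l) dpat \<Rightarrow> ('n,'l) dpat set" where
  "dpclass p = range (\<lambda>a. dp_tr a p)"

definition is_pattern :: "('n::finite,'l) tile set \<Rightarrow> ('n,'l) tile set \<Rightarrow> bool" where
  "is_pattern T M \<longleftrightarrow> finite M \<and> M \<noteq> {} \<and> M \<subseteq> T"

definition MII :: "('n::finite,'l) tile set \<Rightarrow> ('n,'l) dpat set set" where
  "MII T = {dpclass (M,x,y) | M x y. is_pattern T M \<and> x \<in> M \<and> y \<in> M}"

definition dle :: "('n::finite,'l) dpat set \<Rightarrow> ('n,'l) dpat set \<Rightarrow> bool" where
  "dle c c' \<longleftrightarrow> (\<exists>M N x y. (M,x,y) \<in> c \<and> (N,x,y) \<in> c' \<and> M \<subseteq> N)"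

definition dinv :: "('n::finite,'l) dpat set \<Rightarrow> ('n,'l) dpat set" where
  "dinv c = (\<lambda>(M,x,y). (M,y,x)) ` c"

definition glue_cands :: "('n::finite,'l) tile set \<Rightarrow> ('n,'l) dpat set \<Rightarrow> ('n,'l) dpat set \<Rightarrow> ('n,'l) dpat set set" where
  "glue_cands T c c' = {dpclass (L,z1,z2) | L z1 z2 z. is_pattern T L \<and> z1 \<in> L \<and> z2 \<in> L \<and> z \<in> L \<and>
       dle c (dpclass (L,z1,z)) \<and> dle c' (dpclass (L,z,z2))}"

definition composable :: "('n::finite,'l) tile set \<Rightarrow> ('n,'l) dpat set \<Rightarrow> ('n,'l) dpat set \<Rightarrow> bool" where
  "composable T c c' \<longleftrightarrow> glue_cands T c c' \<noteq> {}"

definition dmult :: "('n::finite,'l) tile set \<Rightarrow> ('n,'l) dpat set \<Rightarrow> ('n,'l) dpat set \<Rightarrow> ('n,'l) dpat set" where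
  "dmult T c c' = (THE m. m \<in> glue_cands T c c' \<and> (\<forall>m'\<in>glue_cands T c c'. dle m m'))"

definition Lu :: "('n::finite,'l) tile set \<Rightarrow> ('n,'l) dpat set \<Rightarrow> ('n,'l) dpat set" where
  "Lu T c = dmult T c (dinv c)"

definition Ru :: "('n::finite,'l) tile set \<Rightarrow> ('n,'l) dpat set \<Rightarrow> ('n,'l) dpat set" where
  "Ru T c = dmult T (dinv c) c"

definition is_unit :: "('n::finite,'l) tile set \<Rightarrow> ('n,'l) dpat set \<Rightarrow> bool" where
  "is_unit T u \<longleftrightarrow> u \<in> MII T \<and> (\<exists>M x. u = dpclass (M,x,x))"

definition rad :: "('n::finite,'l) dpat set \<Rightarrow> real" where
  "rad u = Sup {r. 0 \<le> r \<and> (\<forall>(M,x,y)\<in>u. \<forall>p\<in>fst x. ball p r \<subseteq> \<Union>(fst ` M))}"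

definition sub_almost_groupoid :: "('n::finite,'l) tile set \<Rightarrow> ('n,'l) dpat set set \<Rightarrow> bool" where
  "sub_almost_groupoid T N \<longleftrightarrow> N \<subseteq> MII T \<and> (\<forall>c\<in>N. dinv c \<in> N) \<and>
     (\<forall>c\<in>N. \<forall>c'\<in>N. composable T c c' \<longrightarrow> dmult T c c' \<in> N)"

definition ptclass :: "('n::finite,'l) ptil \<Rightarrow> ('n,'l) ptil set" where
  "ptclass sp = range (\<lambda>a. (pat_tr a (fst sp), tile_tr a (snd sp)))"

definition is_ptclass :: "('n::finite,'l) ptil set \<Rightarrow> bool" where
  "is_ptclass \<omega> \<longleftrightarrow> (\<exists>S p. is_tiling S \<and> p \<in> S \<and> \<omega> = ptclass (S,p))"

definition Mr_rep :: "real \<Rightarrow> ('n::finite,'l) tile set \<Rightarrow> ('n,'l) tile \<Rightarrow> ('n,'l) tile set" where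
  "Mr_rep r S p = (THE P. P \<subseteq> S \<and> p \<in> P \<and> (\<forall>q\<in>fst p. ball q r \<subseteq> \<Union>(fst ` P)) \<and>
      (\<forall>P'. P' \<subseteq> S \<and> p \<in> P' \<and> (\<forall>q\<in>fst p. ball q r \<subseteq> \<Union>(fst ` P')) \<longrightarrow> P \<subseteq> P'))"

definition Mr :: "real \<Rightarrow> ('n::finite,'l) ptil set \<Rightarrow> ('n,'l) ptil set" where
  "Mr r \<omega> = (let sp = (SOME sp. sp \<in> \<omega>) in ptclass (Mr_rep r (fst sp) (snd sp), snd sp))"

text \<open>Hull: closure of the pointed tilings T_x (the completion) in the space of pointed tilings.\<close>
definition Omega :: "('n::finite,'l) tile set \<Rightarrow> ('n,'l) ptil set set" where
  "Omega T = {\<omega>. is_ptclass \<omega> \<and> (\<forall>r\<ge>0. \<exists>x\<in>T. Mr r \<omega> = Mr r (ptclass (T,x)))}"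

definition hdist :: "('n::finite,'l) ptil set \<Rightarrow> ('n,'l) ptil set \<Rightarrow> ereal" where
  "hdist \<omega> \<omega>' = (let A = {r. 0 \<le> r \<and> Mr r \<omega> = Mr r \<omega>'} in
      if A = {} then \<infinity> else if bdd_above A then ereal (exp (- Sup A)) else 0)"

definition Omega_open :: "('n::finite,'l) tile set \<Rightarrow> ('n,'l) ptil set set \<Rightarrow> bool" where
  "Omega_open T S \<longleftrightarrow> S \<subseteq> Omega T \<and>
     (\<forall>\<omega>\<in>S. \<exists>\<epsilon>>0. \<forall>\<omega>'\<in>Omega T. hdist \<omega> \<omega>' < ereal \<epsilon> \<longrightarrow> \<omega>' \<in> S)"

definition occ :: "('n::finite,'l) dpat set \<Rightarrow> ('n,'l) ptil set \<Rightarrow> bool" where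
  "occ u \<omega> \<longleftrightarrow> (\<exists>M x S. (M,x,x) \<in> u \<and> (S,x) \<in> \<omega> \<and> M \<subseteq> S)"

definition UU :: "('n::finite,'l) tile set \<Rightarrow> ('n,'l) dpat set \<Rightarrow> ('n,'l) ptil set set" where
  "UU T u = {\<omega> \<in> Omega T. occ u \<omega>}"

definition OmegaN :: "('n::finite,'l) tile set \<Rightarrow> ('n,'l) dpat set set \<Rightarrow> ('n,'l) ptil set set" where
  "OmegaN T N = (\<Union>c\<in>N. UU T (Ru T c))"

definition act :: "('n::finite,'l) ptil set \<Rightarrow> ('n,'l) dpat set \<Rightarrow> ('n,'l) ptil set" where
  "act \<omega> c = (THE \<omega>'. \<exists>S M x y. (S,x) \<in> \<omega> \<and> (M,x,y) \<in> c \<and> M \<subseteq> S \<and> \<omega>' = ptclass (S,y))"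

primrec iprod :: "('n::finite,'l) tile set \<Rightarrow> (nat \<Rightarrow> ('n,'l) dpat set) \<Rightarrow> nat \<Rightarrow> ('n,'l) dpat set" where
  "iprod T u 0 = u 0"
| "iprod T u (Suc k) = dmult T (iprod T u k) (u (Suc k))"

text \<open>Approximating sequence of units taken from the set A (indexing starts at 0).\<close>
definition approx_seq :: "('n::finite,'l) tile set \<Rightarrow> ('n,'l) dpat set set \<Rightarrow> (nat \<Rightarrow> ('n,'l) dpat set) \<Rightarrow> bool" where
  "approx_seq T A u \<longleftrightarrow> (\<forall>\<nu>. u \<nu> \<in> A \<and> is_unit T (u \<nu>)) \<and>
     (\<forall>k. composable T (iprod T u k) (u (Suc k))) \<and>
     filterlim (\<lambda>\<nu>. rad (u \<nu>)) at_top sequentially"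

definition slim :: "(nat \<Rightarrow> ('n::finite,'l) dpat set) \<Rightarrow> ('n,'l) ptil set" where
  "slim u = (THE \<omega>. is_ptclass \<omega> \<and> (\<forall>\<nu>. occ (u \<nu>) \<omega>))"

definition approximating :: "('n::finite,'l) tile set \<Rightarrow> ('n,'l) dpat set set \<Rightarrow> bool" where
  "approximating T N \<longleftrightarrow> (\<forall>\<omega>\<in>OmegaN T N. \<exists>u. approx_seq T N u \<and> slim u = \<omega>)"

section \<open>The groupoids R' (A = MII T, B = Omega T) and R_N (A = N, B = OmegaN T N)\<close>

definition requiv :: "('n::finite,'l) tile set \<Rightarrow> ('n,'l) ptil set \<Rightarrow> ('n,'l) dpat set \<Rightarrow> ('n,'l) dpat set \<Rightarrow> bool" where
  "requiv T \<omega> c c' \<longleftrightarrow> (\<exists>u. is_unit T u \<and> occ u \<omega> \<and> composable T u c \<and> composable T u c' \<and>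
       dmult T u c = dmult T u c')"

definition Rdom :: "('n::finite,'l) tile set \<Rightarrow> ('n,'l) dpat set set \<Rightarrow> ('n,'l) ptil set set
    \<Rightarrow> (('n,'l) ptil set \<times> ('n,'l) dpat set) set" where
  "Rdom T A B = {(\<omega>,c). \<omega> \<in> B \<and> c \<in> A \<and> occ (Lu T c) \<omega>}"

definition rcls :: "('n::finite,'l) tile set \<Rightarrow> ('n,'l) dpat set set \<Rightarrow> ('n,'l) ptil set \<Rightarrow> ('n,'l) dpat set
    \<Rightarrow> (('n,'l) ptil set \<times> ('n,'l) dpat set) set" where
  "rcls T A \<omega> c = {(\<omega>,c') | c'. c' \<in> A \<and> occ (Lu T c') \<omega> \<and> requiv T \<omega> c c'}"

definition Rset :: "('n::finite,'l) tile set \<Rightarrow> ('n,'l) dpat set set \<Rightarrow> ('n,'l) ptil set set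
    \<Rightarrow> (('n,'l) ptil set \<times> ('n,'l) dpat set) set set" where
  "Rset T A B = (\<lambda>(\<omega>,c). rcls T A \<omega> c) ` Rdom T A B"

definition rcomp :: "('n::finite,'l) tile set \<Rightarrow> ('n,'l) dpat set set \<Rightarrow> ('n,'l) ptil set set
    \<Rightarrow> (('n,'l) ptil set \<times> ('n,'l) dpat set) set \<Rightarrow> (('n,'l) ptil set \<times> ('n,'l) dpat set) set \<Rightarrow> bool" where
  "rcomp T A B g h \<longleftrightarrow> (\<exists>\<omega> c c'. (\<omega>,c) \<in> Rdom T A B \<and> (act \<omega> c, c') \<in> Rdom T A B \<and>
       composable T c c' \<and> g = rcls T A \<omega> c \<and> h = rcls T A (act \<omega> c) c')"

definition rmult :: "('n::finite,'l) tile set \<Rightarrow> ('n,'l) dpat set set \<Rightarrow> ('n,'l) ptil set set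
    \<Rightarrow> (('n,'l) ptil set \<times> ('n,'l) dpat set) set \<Rightarrow> (('n,'l) ptil set \<times> ('n,'l) dpat set) set
    \<Rightarrow> (('n,'l) ptil set \<times> ('n,'l) dpat set) set" where
  "rmult T A B g h = (THE k. \<exists>\<omega> c c'. (\<omega>,c) \<in> Rdom T A B \<and> (act \<omega> c, c') \<in> Rdom T A B \<and>
       composable T c c' \<and> g = rcls T A \<omega> c \<and> h = rcls T A (act \<omega> c) c' \<and>
       k = rcls T A \<omega> (dmult T c c'))"

text \<open>Generating open sets {[\<omega>,c] : L(c) \<preceq> \<omega>} of the topology of R'.\<close>
definition Vgen :: "('n::finite,'l) tile set \<Rightarrow> ('n,'l) dpat set
    \<Rightarrow> (('n,'l) ptil set \<times> ('n,'l) dpat set) set set" where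
  "Vgen T c = {rcls T (MII T) \<omega> c | \<omega>. \<omega> \<in> Omega T \<and> occ (Lu T c) \<omega>}"

text \<open>Open subsets of Rdom T A B, topologised as a subspace of
  (subspace B of the hull) \<times> (A with the discrete topology).\<close>
definition dom_open :: "('n::finite,'l) tile set \<Rightarrow> ('n,'l) dpat set set \<Rightarrow> ('n,'l) ptil set set
    \<Rightarrow> (('n,'l) ptil set \<times> ('n,'l) dpat set) set \<Rightarrow> bool" where
  "dom_open T A B D \<longleftrightarrow> D \<subseteq> Rdom T A B \<and>
     (\<forall>(\<omega>,c)\<in>D. \<exists>S. Omega_open T S \<and> \<omega> \<in> S \<and> (\<forall>\<omega>'\<in>S. (\<omega>',c) \<in> Rdom T A B \<longrightarrow> (\<omega>',c) \<in> D))"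

text \<open>Open sets of R_N in the quotient topology.\<close>
definition RN_open :: "('n::finite,'l) tile set \<Rightarrow> ('n,'l) dpat set set
    \<Rightarrow> (('n,'l) ptil set \<times> ('n,'l) dpat set) set set \<Rightarrow> bool" where
  "RN_open T N W \<longleftrightarrow> W \<subseteq> Rset T N (OmegaN T N) \<and>
     dom_open T N (OmegaN T N) {p \<in> Rdom T N (OmegaN T N). rcls T N (fst p) (snd p) \<in> W}"

end

theory Submission
  imports Defs
begin

section \<open>Translations\<close>

lemma tile_tr_0[simp]: "tile_tr 0 t = t"
  by (simp add: tile_tr_def)
lemma tile_tr_add[simp]: "tile_tr a (tile_tr b t) = tile_tr (a+b) t"
  by (simp add: tile_tr_def image_image add.assoc)
lemma fst_tile_tr: "fst (tile_tr a t) = (\<lambda>x. a + x) ` fst t"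
  by (simp add: tile_tr_def)
lemma snd_tile_tr[simp]: "snd (tile_tr a t) = snd t"
  by (simp add: tile_tr_def)
lemma pat_tr_0[simp]: "pat_tr 0 P = P"
  by (simp add: pat_tr_def)
lemma pat_tr_add[simp]: "pat_tr a (pat_tr b P) = pat_tr (a+b) P"
  by (simp add: pat_tr_def image_image)
lemma pat_tr_mono: "P \<subseteq> Q \<Longrightarrow> pat_tr a P \<subseteq> pat_tr a Q"
  by (auto simp: pat_tr_def)
lemma pat_tr_Un: "pat_tr a (P \<union> Q) = pat_tr a P \<union> pat_tr a Q"
  by (auto simp: pat_tr_def)
lemma pat_tr_insert: "pat_tr a (insert t Q) = insert (tile_tr a t) (pat_tr a Q)"
  by (auto simp: pat_tr_def)
lemma tile_tr_cancel[simp]: "tile_tr (-a) (tile_tr a t) = t" "tile_tr a (tile_tr (-a) t) = t"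
  by simp_all
lemma pat_tr_cancel[simp]: "pat_tr (-a) (pat_tr a P) = P" "pat_tr a (pat_tr (-a) P) = P"
  by simp_all
lemma tile_tr_inj[simp]: "tile_tr a s = tile_tr a t \<longleftrightarrow> s = t"
  by (metis tile_tr_cancel(1))
lemma pat_tr_subset_iff[simp]: "pat_tr a P \<subseteq> pat_tr a Q \<longleftrightarrow> P \<subseteq> Q"
  by (metis pat_tr_cancel(1) pat_tr_mono)
lemma pat_tr_inj[simp]: "pat_tr a P = pat_tr a Q \<longleftrightarrow> P = Q"
  by (metis pat_tr_cancel(1))
lemma pat_tr_mem: "t \<in> pat_tr a P \<longleftrightarrow> tile_tr (-a) t \<in> P"
  by (auto simp: pat_tr_def image_iff) (metis tile_tr_cancel(2))
lemma in_pat_tr[simp]: "tile_tr a t \<in> pat_tr a P \<longleftrightarrow> t \<in> P"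
  by (simp add: pat_tr_mem)
lemma finite_pat_tr[simp]: "finite (pat_tr a P) = finite P"
  by (metis finite_imageI pat_tr_cancel(1) pat_tr_def)
lemma pat_tr_empty[simp]: "pat_tr a P = {} \<longleftrightarrow> P = {}"
  by (simp add: pat_tr_def)
lemma countable_pat_tr: "countable P \<Longrightarrow> countable (pat_tr a P)"
  by (simp add: pat_tr_def)
lemma pat_tr_Union_fst: "\<Union>(fst ` pat_tr a P) = (\<lambda>x. a + x) ` \<Union>(fst ` P)"
  by (auto simp: pat_tr_def fst_tile_tr)

definition nice :: "('n::finite,'l) tile \<Rightarrow> bool" where
  "nice t \<longleftrightarrow> fst t \<noteq> {} \<and> bounded (fst t)"

lemma nice_tr: "nice t \<Longrightarrow> nice (tile_tr a t)"
  by (auto simp: nice_def fst_tile_tr bounded_translation)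

lemma transl_fix_zero:
  fixes A :: "(real^'n::finite) set"
  assumes "A \<noteq> {}" "bounded A" "(\<lambda>x. a + x) ` A = A"
  shows "a = 0"
proof (rule ccontr)
  assume a0: "a \<noteq> 0"
  have step: "\<forall>z\<in>A. z + of_nat n *\<^sub>R a \<in> A" for n
  proof (induction n)
    case 0 then show ?case by simp
  next
    case (Suc n)
    show ?case
    proof
      fix z assume "z \<in> A"
      then have "z + of_nat n *\<^sub>R a \<in> A" using Suc by blast
      then have "a + (z + of_nat n *\<^sub>R a) \<in> A" using assms(3) by blast
      then show "z + of_nat (Suc n) *\<^sub>R a \<in> A" by (simp add: algebra_simps)
    qed
  qed
  obtain z where z: "z \<in> A" using assms(1) by blast
  obtain B where B: "\<And>w. w \<in> A \<Longrightarrow> norm w \<le> B" using assms(2) bounded_iff by blast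
  obtain n :: nat where n: "2 * B / norm a < of_nat n" using reals_Archimedean2 by blast
  have "norm (of_nat n *\<^sub>R a) \<le> norm (z + of_nat n *\<^sub>R a) + norm z"
    by (metis add_diff_cancel_left' norm_triangle_ineq4 add.commute)
  also have "\<dots> \<le> 2 * B" using B[OF z] B step z by (smt (verit) )
  finally have "of_nat n * norm a \<le> 2 * B" by simp
  moreover have "norm a > 0" using a0 by simp
  ultimately show False using n by (simp add: field_simps)
qed

lemma tile_tr_fix: "nice t \<Longrightarrow> tile_tr a t = t \<Longrightarrow> a = 0"
  unfolding nice_def
  by (metis (no_types, lifting) fst_conv prod.collapse transl_fix_zero fst_tile_tr)

lemma tile_tr_inj2: "nice t \<Longrightarrow> tile_tr a t = tile_tr b t \<Longrightarrow> a = b"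
proof -
  assume "nice t" "tile_tr a t = tile_tr b t"
  then have "tile_tr (-b + a) t = t" by (metis tile_tr_add tile_tr_cancel(1))
  then have "-b + a = 0" using tile_tr_fix \<open>nice t\<close> by blast
  then show "a = b" by (simp add: add.commute neg_eq_iff_add_eq_0)
qed

lemma dp_tr_simp[simp]: "dp_tr a (M,x,y) = (pat_tr a M, tile_tr a x, tile_tr a y)"
  by (simp add: dp_tr_def)

lemma mem_dpclass: "(K,p,e) \<in> dpclass (M,x,y) \<longleftrightarrow> (\<exists>a. K = pat_tr a M \<and> p = tile_tr a x \<and> e = tile_tr a y)"
  by (auto simp: dpclass_def)

lemma dpclass_self[simp]: "(M,x,y) \<in> dpclass (M,x,y)"
  unfolding mem_dpclass by (rule exI[of _ 0]) simp

lemma dpclass_eqI: "(K,p,e) \<in> dpclass (M,x,y) \<Longrightarrow> dpclass (K,p,e) = dpclass (M,x,y)"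
proof -
  assume "(K,p,e) \<in> dpclass (M,x,y)"
  then obtain a where a: "K = pat_tr a M" "p = tile_tr a x" "e = tile_tr a y" by (auto simp: mem_dpclass)
  show ?thesis
  proof (rule set_eqI)
    fix q :: "('a,'b) dpat"
    obtain Q u v where q: "q = (Q,u,v)" by (cases q) auto
    show "q \<in> dpclass (K,p,e) \<longleftrightarrow> q \<in> dpclass (M,x,y)"
    proof
      assume "q \<in> dpclass (K,p,e)"
      then obtain b where "Q = pat_tr b K" "u = tile_tr b p" "v = tile_tr b e" by (auto simp: mem_dpclass q)
      then show "q \<in> dpclass (M,x,y)" unfolding q mem_dpclass a by (intro exI[of _ "b+a"]) simp
    next
      assume "q \<in> dpclass (M,x,y)"
      then obtain b where "Q = pat_tr b M" "u = tile_tr b x" "v = tile_tr b y" by (auto simp: mem_dpclass q)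
      then show "q \<in> dpclass (K,p,e)" unfolding q mem_dpclass a by (intro exI[of _ "b + -a"]) simp
    qed
  qed
qed

lemma dpclass_tr[simp]: "dpclass (pat_tr a M, tile_tr a x, tile_tr a y) = dpclass (M,x,y)"
  by (rule dpclass_eqI) (auto simp: mem_dpclass)

lemma dpclass_eq_iff: "dpclass (K,p,e) = dpclass (M,x,y) \<longleftrightarrow> (K,p,e) \<in> dpclass (M,x,y)"
  by (metis dpclass_eqI dpclass_self)

lemma dle_iff: "dle (dpclass (M,x,y)) (dpclass (N,x',y')) \<longleftrightarrow>
   (\<exists>a. pat_tr a M \<subseteq> N \<and> tile_tr a x = x' \<and> tile_tr a y = y')"
proof
  assume "dle (dpclass (M,x,y)) (dpclass (N,x',y'))"
  then obtain M1 N1 x1 y1 where h: "(M1,x1,y1) \<in> dpclass (M,x,y)" "(N1,x1,y1) \<in> dpclass (N,x',y')" "M1 \<subseteq> N1"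
    by (auto simp: dle_def)
  from h(1) obtain al where al: "M1 = pat_tr al M" "x1 = tile_tr al x" "y1 = tile_tr al y" by (auto simp: mem_dpclass)
  from h(2) obtain be where be: "N1 = pat_tr be N" "x1 = tile_tr be x'" "y1 = tile_tr be y'" by (auto simp: mem_dpclass)
  have "pat_tr (-be + al) M \<subseteq> N"
    using h(3) al be pat_tr_subset_iff[of be "pat_tr (-be + al) M" N] by (simp add: add.assoc[symmetric])
  moreover have "tile_tr (-be + al) x = x'" "tile_tr (-be + al) y = y'"
    using al be by (metis tile_tr_add tile_tr_cancel(1))+
  ultimately show "\<exists>a. pat_tr a M \<subseteq> N \<and> tile_tr a x = x' \<and> tile_tr a y = y'" by blast
next
  assume "\<exists>a. pat_tr a M \<subseteq> N \<and> tile_tr a x = x' \<and> tile_tr a y = y'"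
  then obtain a where "pat_tr a M \<subseteq> N" "tile_tr a x = x'" "tile_tr a y = y'" by blast
  then show "dle (dpclass (M,x,y)) (dpclass (N,x',y'))"
    unfolding dle_def
    by (intro exI[of _ "pat_tr a M"] exI[of _ N] exI[of _ x'] exI[of _ y']) (auto simp: mem_dpclass)
qed

lemma dinv_dpclass[simp]: "dinv (dpclass (M,x,y)) = dpclass (M,y,x)"
  unfolding dinv_def dpclass_def by (auto simp: image_image)


definition goodpat :: "('n::finite,'l) tile set \<Rightarrow> ('n,'l) tile set \<Rightarrow> bool" where
  "goodpat T K \<longleftrightarrow> finite K \<and> K \<noteq> {} \<and> (\<exists>a. pat_tr a K \<subseteq> T)"

definition tiles_nice :: "('n::finite,'l) tile set \<Rightarrow> bool" where
  "tiles_nice T \<longleftrightarrow> (\<forall>t\<in>T. nice t)"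

lemma tiling_nice: "is_tiling T \<Longrightarrow> tiles_nice T"
  by (auto simp: is_tiling_def tiles_nice_def nice_def)

lemma goodpat_nice: "tiles_nice T \<Longrightarrow> goodpat T K \<Longrightarrow> t \<in> K \<Longrightarrow> nice t"
  unfolding goodpat_def tiles_nice_def
  by (metis in_pat_tr nice_tr subsetD tile_tr_cancel(1))

lemma goodpat_tr[simp]: "goodpat T (pat_tr a K) = goodpat T K"
  unfolding goodpat_def by (metis finite_pat_tr pat_tr_add pat_tr_cancel(1) pat_tr_empty)

lemma goodpat_subset: "goodpat T K \<Longrightarrow> K' \<subseteq> K \<Longrightarrow> K' \<noteq> {} \<Longrightarrow> goodpat T K'"
  unfolding goodpat_def by (meson finite_subset order_trans pat_tr_mono)

lemma is_pattern_goodpat: "is_pattern T L \<Longrightarrow> goodpat T L"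
  unfolding is_pattern_def goodpat_def by (metis pat_tr_0)

lemma MII_iff: "dpclass (K,p,e) \<in> MII T \<longleftrightarrow> goodpat T K \<and> p \<in> K \<and> e \<in> K"
proof
  assume "dpclass (K,p,e) \<in> MII T"
  then obtain M x y where h: "dpclass (K,p,e) = dpclass (M,x,y)" "is_pattern T M" "x \<in> M" "y \<in> M"
    by (auto simp: MII_def)
  then obtain a where "K = pat_tr a M" "p = tile_tr a x" "e = tile_tr a y"
    using dpclass_eq_iff mem_dpclass by metis
  then show "goodpat T K \<and> p \<in> K \<and> e \<in> K" using h is_pattern_goodpat by auto
next
  assume h: "goodpat T K \<and> p \<in> K \<and> e \<in> K"
  then obtain a where a: "pat_tr a K \<subseteq> T" by (auto simp: goodpat_def)
  have "is_pattern T (pat_tr a K)" using h a by (auto simp: is_pattern_def goodpat_def)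
  moreover have "dpclass (K,p,e) = dpclass (pat_tr a K, tile_tr a p, tile_tr a e)" by simp
  moreover have "tile_tr a p \<in> pat_tr a K" "tile_tr a e \<in> pat_tr a K" using h by simp_all
  ultimately show "dpclass (K,p,e) \<in> MII T" unfolding MII_def mem_Collect_eq
    by (intro exI[of _ "pat_tr a K"] exI[of _ "tile_tr a p"] exI[of _ "tile_tr a e"]) simp
qed

lemma MII_obtain: "c \<in> MII T \<Longrightarrow> \<exists>K p e. c = dpclass (K,p,e) \<and> goodpat T K \<and> p \<in> K \<and> e \<in> K"
  unfolding MII_def using is_pattern_goodpat by blast

lemma MII_member: "c \<in> MII T \<Longrightarrow> (K,p,e) \<in> c \<Longrightarrow> c = dpclass (K,p,e) \<and> goodpat T K \<and> p \<in> K \<and> e \<in> K"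
  by (metis MII_iff MII_obtain dpclass_eqI)

lemma dinv_MII: "c \<in> MII T \<Longrightarrow> dinv c \<in> MII T"
  using MII_obtain MII_iff by (metis dinv_dpclass)

section \<open>Composition\<close>

lemma cand_dest:
  assumes T: "tiles_nice T" and c: "dpclass (M,x,y) \<in> MII T" and c': "dpclass (M',x',y') \<in> MII T"
    and m: "m \<in> glue_cands T (dpclass (M,x,y)) (dpclass (M',x',y'))"
    and b: "tile_tr b x' = y"
  shows "\<exists>L z1 z2 a. m = dpclass (L,z1,z2) \<and> is_pattern T L \<and> z1 \<in> L \<and> z2 \<in> L \<and>
      pat_tr a (M \<union> pat_tr b M') \<subseteq> L \<and> tile_tr a x = z1 \<and> tile_tr a (tile_tr b y') = z2"
proof -
  obtain L z1 z2 z where m: "m = dpclass (L,z1,z2)" "is_pattern T L" "z1 \<in> L" "z2 \<in> L" "z \<in> L"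
    "dle (dpclass (M,x,y)) (dpclass (L,z1,z))" "dle (dpclass (M',x',y')) (dpclass (L,z,z2))"
    using m unfolding glue_cands_def by blast
  obtain a where a: "pat_tr a M \<subseteq> L" "tile_tr a x = z1" "tile_tr a y = z" using m(6) dle_iff by blast
  obtain a' where a': "pat_tr a' M' \<subseteq> L" "tile_tr a' x' = z" "tile_tr a' y' = z2" using m(7) dle_iff by blast
  have nx': "nice x'" using c' MII_iff goodpat_nice T by blast
  have "tile_tr a' x' = tile_tr (a + b) x'" using a(3) a'(2) b by (metis tile_tr_add)
  then have aa: "a' = a + b" using tile_tr_inj2 nx' by blast
  show ?thesis
    using m a a' aa by (intro exI[of _ L] exI[of _ z1] exI[of _ z2] exI[of _ a]) (auto simp: pat_tr_Un)
qed

lemma composable_iff: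
  assumes T: "tiles_nice T" and c: "dpclass (M,x,y) \<in> MII T" and c': "dpclass (M',x',y') \<in> MII T"
  shows "composable T (dpclass (M,x,y)) (dpclass (M',x',y')) \<longleftrightarrow>
     (\<exists>b. tile_tr b x' = y \<and> (\<exists>a. pat_tr a (M \<union> pat_tr b M') \<subseteq> T))"
proof
  assume "composable T (dpclass (M,x,y)) (dpclass (M',x',y'))"
  then obtain m where m: "m \<in> glue_cands T (dpclass (M,x,y)) (dpclass (M',x',y'))"
    unfolding composable_def by blast
  obtain L z1 z2 z where L: "is_pattern T L" "z \<in> L"
    "dle (dpclass (M,x,y)) (dpclass (L,z1,z))" "dle (dpclass (M',x',y')) (dpclass (L,z,z2))"
    using m unfolding glue_cands_def by blast
  obtain a where a: "pat_tr a M \<subseteq> L" "tile_tr a x = z1" "tile_tr a y = z" using L(3) dle_iff by blast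
  obtain a' where a': "pat_tr a' M' \<subseteq> L" "tile_tr a' x' = z" "tile_tr a' y' = z2" using L(4) dle_iff by blast
  have b: "tile_tr (-a + a') x' = y" using a a' by (metis tile_tr_add tile_tr_cancel(1))
  from cand_dest[OF T c c' m b] obtain L' a2 where "is_pattern T L'" "pat_tr a2 (M \<union> pat_tr (-a + a') M') \<subseteq> L'"
    by blast
  then have "pat_tr a2 (M \<union> pat_tr (-a + a') M') \<subseteq> T" unfolding is_pattern_def by blast
  then show "\<exists>b. tile_tr b x' = y \<and> (\<exists>a. pat_tr a (M \<union> pat_tr b M') \<subseteq> T)"
    using b by blast
next
  assume "\<exists>b. tile_tr b x' = y \<and> (\<exists>a. pat_tr a (M \<union> pat_tr b M') \<subseteq> T)"
  then obtain b a where b: "tile_tr b x' = y" and a: "pat_tr a (M \<union> pat_tr b M') \<subseteq> T" by blast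
  have fin: "finite M" "finite M'" "x \<in> M" "y \<in> M" "x' \<in> M'" "y' \<in> M'"
    using c c' by (auto simp: MII_iff goodpat_def)
  let ?L = "pat_tr a (M \<union> pat_tr b M')"
  have "is_pattern T ?L" using a fin by (auto simp: is_pattern_def pat_tr_Un)
  moreover have "dle (dpclass (M,x,y)) (dpclass (?L, tile_tr a x, tile_tr a y))"
    unfolding dle_iff by (intro exI[of _ a]) (auto simp: pat_tr_Un)
  moreover have "dle (dpclass (M',x',y')) (dpclass (?L, tile_tr a y, tile_tr a (tile_tr b y')))"
    unfolding dle_iff using b by (intro exI[of _ "a+b"]) (auto simp: pat_tr_Un)
  moreover have "tile_tr a x \<in> ?L" "tile_tr a y \<in> ?L" "tile_tr a (tile_tr b y') \<in> ?L"
    using fin by (auto simp: pat_tr_Un)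
  ultimately have "dpclass (?L, tile_tr a x, tile_tr a (tile_tr b y')) \<in> glue_cands T (dpclass (M,x,y)) (dpclass (M',x',y'))"
    unfolding glue_cands_def by blast
  then show "composable T (dpclass (M,x,y)) (dpclass (M',x',y'))" unfolding composable_def by blast
qed

lemma dmult_eq:
  assumes T: "tiles_nice T" and c: "dpclass (M,x,y) \<in> MII T" and c': "dpclass (M',x',y') \<in> MII T"
    and comp: "composable T (dpclass (M,x,y)) (dpclass (M',x',y'))"
    and b: "tile_tr b x' = y"
  shows "dmult T (dpclass (M,x,y)) (dpclass (M',x',y')) = dpclass (M \<union> pat_tr b M', x, tile_tr b y')"
proof -
  let ?c = "dpclass (M,x,y)" and ?c' = "dpclass (M',x',y')"
  let ?K = "M \<union> pat_tr b M'"
  let ?m0 = "dpclass (?K, x, tile_tr b y')"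
  have nx: "nice x" using c MII_iff goodpat_nice T by blast
  obtain m where m: "m \<in> glue_cands T ?c ?c'" using comp unfolding composable_def by blast
  have min: "dle ?m0 m'" if "m' \<in> glue_cands T ?c ?c'" for m'
    using cand_dest[OF T c c' that b] dle_iff by metis
  have m0in: "?m0 \<in> glue_cands T ?c ?c'"
  proof -
    obtain L z1 z2 a where L: "m = dpclass (L,z1,z2)" "is_pattern T L"
      "pat_tr a ?K \<subseteq> L" "tile_tr a x = z1" "tile_tr a (tile_tr b y') = z2"
      using cand_dest[OF T c c' m b] by blast
    have "\<exists>b. tile_tr b x' = y \<and> (\<exists>a. pat_tr a (M \<union> pat_tr b M') \<subseteq> T)"
      using composable_iff[OF T c c'] comp by blast
    have "pat_tr a ?K \<subseteq> T" using L by (auto simp: is_pattern_def)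
    have fin: "finite M" "finite M'" "x \<in> M" "y \<in> M" "x' \<in> M'" "y' \<in> M'"
      using c c' by (auto simp: MII_iff goodpat_def)
    let ?L = "pat_tr a ?K"
    have "is_pattern T ?L" using \<open>pat_tr a ?K \<subseteq> T\<close> fin by (auto simp: is_pattern_def pat_tr_Un)
    moreover have "dle ?c (dpclass (?L, tile_tr a x, tile_tr a y))"
      unfolding dle_iff by (intro exI[of _ a]) (auto simp: pat_tr_Un)
    moreover have "dle ?c' (dpclass (?L, tile_tr a y, tile_tr a (tile_tr b y')))"
      unfolding dle_iff using b by (intro exI[of _ "a+b"]) (auto simp: pat_tr_Un)
    moreover have "tile_tr a x \<in> ?L" "tile_tr a y \<in> ?L" "tile_tr a (tile_tr b y') \<in> ?L"
      using fin by (auto simp: pat_tr_Un)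
    moreover have "?m0 = dpclass (?L, tile_tr a x, tile_tr a (tile_tr b y'))" by (rule dpclass_tr[symmetric])
    ultimately show ?thesis unfolding glue_cands_def by blast
  qed
  have uniq: "m1 = ?m0" if m1in: "m1 \<in> glue_cands T ?c ?c'" and m1min: "\<forall>m'\<in>glue_cands T ?c ?c'. dle m1 m'" for m1
  proof -
    obtain L z1 z2 a where L: "m1 = dpclass (L,z1,z2)"
      "pat_tr a ?K \<subseteq> L" "tile_tr a x = z1" "tile_tr a (tile_tr b y') = z2"
      using cand_dest[OF T c c' m1in b] by blast
    have "dle m1 ?m0" using m1min m0in by blast
    then obtain al where al: "pat_tr al L \<subseteq> ?K" "tile_tr al z1 = x" using L dle_iff by blast
    have "tile_tr (al + a) x = x" using al(2) L(3) by (metis tile_tr_add)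
    then have "al + a = 0" using tile_tr_fix nx by blast
    then have aa: "al = -a" by (simp add: add_eq_0_iff)
    have "L \<subseteq> pat_tr a ?K" using al(1) aa pat_tr_subset_iff[of "-a" L "pat_tr a ?K"] by simp
    then have "L = pat_tr a ?K" using L by blast
    then show ?thesis using L(1,3,4) by (metis dpclass_tr)
  qed
  show ?thesis unfolding dmult_def
    by (rule the_equality) (use m0in min uniq in blast)+
qed

lemma dmult_MII:
  assumes T: "tiles_nice T" and c: "c \<in> MII T" and c': "c' \<in> MII T" and comp: "composable T c c'"
  shows "dmult T c c' \<in> MII T"
proof -
  obtain M x y where cM: "c = dpclass (M,x,y)" using c MII_obtain by blast
  obtain M' x' y' where cM': "c' = dpclass (M',x',y')" using c' MII_obtain by blast
  obtain b a where b: "tile_tr b x' = y" "pat_tr a (M \<union> pat_tr b M') \<subseteq> T"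
    using composable_iff[OF T c[unfolded cM] c'[unfolded cM']] comp cM cM' by blast
  have fin: "finite M" "finite M'" "x \<in> M" "y \<in> M" "x' \<in> M'" "y' \<in> M'"
    using c c' cM cM' by (auto simp: MII_iff goodpat_def)
  have g: "goodpat T (M \<union> pat_tr b M')" using b fin unfolding goodpat_def by auto
  have "x \<in> M \<union> pat_tr b M'" "tile_tr b y' \<in> M \<union> pat_tr b M'" using fin by simp_all
  then show ?thesis
    using dmult_eq[OF T c[unfolded cM] c'[unfolded cM'] comp[unfolded cM cM'] b(1)] cM cM' g
    by (simp add: MII_iff)
qed


lemma mem_ptclass: "(S',p') \<in> ptclass (S,p) \<longleftrightarrow> (\<exists>a. S' = pat_tr a S \<and> p' = tile_tr a p)"
  by (auto simp: ptclass_def)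

lemma ptclass_self[simp]: "(S,p) \<in> ptclass (S,p)"
  unfolding mem_ptclass by (rule exI[of _ 0]) simp

lemma ptclass_eqI: "(S',p') \<in> ptclass (S,p) \<Longrightarrow> ptclass (S',p') = ptclass (S,p)"
proof -
  assume "(S',p') \<in> ptclass (S,p)"
  then obtain a where a: "S' = pat_tr a S" "p' = tile_tr a p" by (auto simp: mem_ptclass)
  show ?thesis
  proof (rule set_eqI)
    fix q :: "('a,'b) ptil"
    obtain Q u where q: "q = (Q,u)" by (cases q) auto
    show "q \<in> ptclass (S',p') \<longleftrightarrow> q \<in> ptclass (S,p)"
    proof
      assume "q \<in> ptclass (S',p')"
      then obtain b where "Q = pat_tr b S'" "u = tile_tr b p'" by (auto simp: mem_ptclass q)
      then show "q \<in> ptclass (S,p)" unfolding q mem_ptclass a by (intro exI[of _ "b+a"]) simp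
    next
      assume "q \<in> ptclass (S,p)"
      then obtain b where "Q = pat_tr b S" "u = tile_tr b p" by (auto simp: mem_ptclass q)
      then show "q \<in> ptclass (S',p')" unfolding q mem_ptclass a by (intro exI[of _ "b + -a"]) simp
    qed
  qed
qed

lemma ptclass_tr[simp]: "ptclass (pat_tr a S, tile_tr a p) = ptclass (S,p)"
  by (rule ptclass_eqI) (auto simp: mem_ptclass)

lemma ptclass_eq_iff: "ptclass (S',p') = ptclass (S,p) \<longleftrightarrow> (S',p') \<in> ptclass (S,p)"
  by (metis ptclass_eqI ptclass_self)

section \<open>Placements\<close>

definition placed :: "('n::finite,'l) tile set \<Rightarrow> ('n,'l) tile \<Rightarrow> ('n,'l) dpat set \<Rightarrow> ('n,'l) tile \<Rightarrow> bool" where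
  "placed S p c e \<longleftrightarrow> (\<exists>K. (K,p,e) \<in> c \<and> K \<subseteq> S)"

lemma class_fix:
  assumes T: "tiles_nice T" and c: "c \<in> MII T" and h: "(K,p,e) \<in> c" "(K',p,e') \<in> c"
  shows "K' = K \<and> e' = e"
proof -
  have cK: "c = dpclass (K,p,e)" "goodpat T K" "p \<in> K" using MII_member[OF c h(1)] by auto
  then obtain a where a: "K' = pat_tr a K" "p = tile_tr a p" "e' = tile_tr a e"
    using h(2) mem_dpclass by metis
  have "nice p" using goodpat_nice[OF T cK(2) cK(3)] .
  then have "a = 0" using a(2) tile_tr_fix by metis
  then show ?thesis using a by simp
qed

lemma placed_unique:
  assumes T: "tiles_nice T" and c: "c \<in> MII T" and "placed S p c e" "placed S' p c e'"
  shows "e' = e"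
  using assms class_fix unfolding placed_def by metis

lemma placed_unique_pat:
  assumes T: "tiles_nice T" and c: "c \<in> MII T" and "(K,p,e) \<in> c" "(K',p,e') \<in> c"
  shows "K' = K"
  using assms class_fix by metis

lemma placed_mono: "placed S p c e \<Longrightarrow> S \<subseteq> S' \<Longrightarrow> placed S' p c e"
  unfolding placed_def by blast

lemma MII_tr_closed: "c \<in> MII T \<Longrightarrow> (K,p,e) \<in> c \<Longrightarrow> (pat_tr a K, tile_tr a p, tile_tr a e) \<in> c"
  using MII_member by (metis dpclass_self dpclass_tr)

lemma placed_tr: "c \<in> MII T \<Longrightarrow> placed S p c e \<Longrightarrow> placed (pat_tr a S) (tile_tr a p) c (tile_tr a e)"
  unfolding placed_def using MII_tr_closed pat_tr_mono by metis

lemma placed_tr_iff: "c \<in> MII T \<Longrightarrow> placed (pat_tr a S) (tile_tr a p) c (tile_tr a e) \<longleftrightarrow> placed S p c e"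
  by (metis placed_tr pat_tr_cancel(1) tile_tr_cancel(1))

lemma occ_iff:
  assumes u: "u \<in> MII T"
  shows "occ u (ptclass (S,p)) \<longleftrightarrow> placed S p u p"
proof
  assume "occ u (ptclass (S,p))"
  then obtain M x S1 where h: "(M,x,x) \<in> u" "(S1,x) \<in> ptclass (S,p)" "M \<subseteq> S1"
    unfolding occ_def by blast
  then obtain a where a: "S1 = pat_tr a S" "x = tile_tr a p" by (auto simp: mem_ptclass)
  have "(pat_tr (-a) M, p, p) \<in> u" using MII_tr_closed[OF u h(1), of "-a"] a by simp
  moreover have "pat_tr (-a) M \<subseteq> S" using h(3) a pat_tr_mono[OF h(3), of "-a"] by simp
  ultimately show "placed S p u p" unfolding placed_def by blast
next
  assume "placed S p u p"
  then show "occ u (ptclass (S,p))" unfolding placed_def occ_def using ptclass_self by blast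
qed



lemma Lu_eq:
  assumes T: "tiles_nice T" and c: "dpclass (M,x,y) \<in> MII T"
  shows "Lu T (dpclass (M,x,y)) = dpclass (M,x,x)"
proof -
  have c': "dpclass (M,y,x) \<in> MII T" using c by (simp add: MII_iff)
  obtain a where a: "pat_tr a M \<subseteq> T" using c by (auto simp: MII_iff goodpat_def)
  have comp: "composable T (dpclass (M,x,y)) (dpclass (M,y,x))"
    unfolding composable_iff[OF T c c'] using a by (intro exI[of _ 0]) (simp, blast)
  show ?thesis unfolding Lu_def dinv_dpclass
    using dmult_eq[OF T c c' comp, of 0] by simp
qed

lemma Ru_eq:
  assumes T: "tiles_nice T" and c: "dpclass (M,x,y) \<in> MII T"
  shows "Ru T (dpclass (M,x,y)) = dpclass (M,y,y)"
proof -
  have c': "dpclass (M,y,x) \<in> MII T" using c by (simp add: MII_iff)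
  obtain a where a: "pat_tr a M \<subseteq> T" using c by (auto simp: MII_iff goodpat_def)
  have comp: "composable T (dpclass (M,y,x)) (dpclass (M,x,y))"
    unfolding composable_iff[OF T c' c] using a by (intro exI[of _ 0]) (simp, blast)
  show ?thesis unfolding Ru_def dinv_dpclass
    using dmult_eq[OF T c' c comp, of 0] by simp
qed

lemma Lu_MII: assumes T: "tiles_nice T" and c: "c \<in> MII T" shows "Lu T c \<in> MII T"
proof -
  obtain M x y where cM: "c = dpclass (M,x,y)" "goodpat T M" "x \<in> M" "y \<in> M" using MII_obtain[OF c] by blast
  have "Lu T c = dpclass (M,x,x)" using Lu_eq[OF T] c cM(1) by blast
  then show ?thesis using cM by (simp add: MII_iff)
qed

lemma occ_Lu_iff:
  assumes T: "tiles_nice T" and c: "c \<in> MII T"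
  shows "occ (Lu T c) (ptclass (S,p)) \<longleftrightarrow> (\<exists>e. placed S p c e)"
proof -
  obtain M x y where cM: "c = dpclass (M,x,y)" "goodpat T M" "x \<in> M" "y \<in> M" using MII_obtain[OF c] by blast
  have L: "Lu T c = dpclass (M,x,x)" using Lu_eq T c cM by blast
  have LM: "Lu T c \<in> MII T" using L cM by (simp add: MII_iff)
  show ?thesis
  proof
    assume "occ (Lu T c) (ptclass (S,p))"
    then obtain K where K: "(K,p,p) \<in> dpclass (M,x,x)" "K \<subseteq> S" using occ_iff[OF LM] L placed_def by metis
    then obtain a where a: "K = pat_tr a M" "p = tile_tr a x" using mem_dpclass by blast
    have "(K,p,tile_tr a y) \<in> c" using a cM(1) mem_dpclass by blast
    then show "\<exists>e. placed S p c e" using K(2) placed_def by blast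
  next
    assume "\<exists>e. placed S p c e"
    then obtain K e where K: "(K,p,e) \<in> c" "K \<subseteq> S" using placed_def by blast
    then obtain a where a: "K = pat_tr a M" "p = tile_tr a x" using mem_dpclass cM(1) by blast
    have "(K,p,p) \<in> dpclass (M,x,x)" using a mem_dpclass by blast
    then show "occ (Lu T c) (ptclass (S,p))" using occ_iff[OF LM] L placed_def K(2) by metis
  qed
qed

lemma unit_rep: "is_unit T u \<Longrightarrow> (K,p,e) \<in> u \<Longrightarrow> e = p"
  unfolding is_unit_def by (auto simp: mem_dpclass)

lemma unit_iff: assumes "dpclass (K,p,e) \<in> MII T" shows "is_unit T (dpclass (K,p,e)) \<longleftrightarrow> e = p"
proof
  assume "is_unit T (dpclass (K,p,e))"
  then show "e = p" using unit_rep[of T "dpclass (K,p,e)" K p e] by simp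
next
  assume "e = p"
  then show "is_unit T (dpclass (K,p,e))" unfolding is_unit_def using assms by blast
qed

lemma dinv_unit: "is_unit T u \<Longrightarrow> dinv u = u"
  unfolding is_unit_def by auto



lemma dle_placed:
  assumes "c \<in> MII T" "d \<in> MII T" "dle c d" "(K,p,e) \<in> d"
  shows "\<exists>Kc. (Kc,p,e) \<in> c \<and> Kc \<subseteq> K"
proof -
  obtain M x y where cM: "c = dpclass (M,x,y)" using MII_obtain assms(1) by blast
  have dK: "d = dpclass (K,p,e)" using MII_member assms(2,4) by blast
  obtain a where "pat_tr a M \<subseteq> K" "tile_tr a x = p" "tile_tr a y = e" using assms(3) cM dK dle_iff by metis
  then show ?thesis using cM by (auto simp: mem_dpclass)
qed

lemma dle_placed2:
  assumes "c \<in> MII T" "d \<in> MII T" "dle c d" "placed S p d e"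
  shows "placed S p c e"
proof -
  obtain K where K: "(K,p,e) \<in> d" "K \<subseteq> S" using assms(4) placed_def by blast
  from dle_placed[OF assms(1-3) K(1)] obtain Kc where "(Kc,p,e) \<in> c" "Kc \<subseteq> K" by blast
  then show ?thesis using K(2) placed_def by blast
qed

lemma dle_trans:
  assumes "c1 \<in> MII T" "c2 \<in> MII T" "c3 \<in> MII T" "dle c1 c2" "dle c2 c3"
  shows "dle c1 c3"
proof -
  obtain M x y where c3: "c3 = dpclass (M,x,y)" using MII_obtain assms(3) by blast
  have "(M,x,y) \<in> c3" using c3 by simp
  from dle_placed[OF assms(2,3,5) this] obtain K2 where "(K2,x,y) \<in> c2" "K2 \<subseteq> M" by blast
  moreover then obtain K1 where "(K1,x,y) \<in> c1" "K1 \<subseteq> K2" using dle_placed[OF assms(1,2,4)] by blast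
  ultimately have "(K1,x,y) \<in> c1" "(M,x,y) \<in> c3" "K1 \<subseteq> M" using c3 by auto
  then show ?thesis unfolding dle_def by blast
qed

lemma dle_refl: assumes "c \<in> MII T" shows "dle c c"
proof -
  obtain M x y where "c = dpclass (M,x,y)" using MII_obtain assms by blast
  moreover have "(M,x,y) \<in> dpclass (M,x,y)" by simp
  ultimately show ?thesis unfolding dle_def by blast
qed

lemma dle_comp_mono:
  assumes T: "tiles_nice T" and a: "a \<in> MII T" and b: "b \<in> MII T" and c: "c \<in> MII T"
    and ab: "dle a b" and comp: "composable T b c"
  shows "composable T a c \<and> dle (dmult T a c) (dmult T b c)"
proof -
  obtain N x y where bN: "b = dpclass (N,x,y)" using MII_obtain b by blast
  have "(N,x,y) \<in> b" using bN by simp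
  from dle_placed[OF a b ab this] obtain M1 where M1: "(M1,x,y) \<in> a" "M1 \<subseteq> N" by blast
  have aM: "a = dpclass (M1,x,y)" using MII_member a M1 by blast
  obtain C u v where cC: "c = dpclass (C,u,v)" using MII_obtain c by blast
  obtain be al where be: "tile_tr be u = y" "pat_tr al (N \<union> pat_tr be C) \<subseteq> T"
    using composable_iff[OF T b[unfolded bN] c[unfolded cC]] comp bN cC by blast
  have "pat_tr al (M1 \<union> pat_tr be C) \<subseteq> T"
    using be(2) M1(2) pat_tr_mono[of "M1 \<union> pat_tr be C" "N \<union> pat_tr be C" al] by blast
  then have compa: "composable T a c"
    using composable_iff[OF T a[unfolded aM] c[unfolded cC]] be aM cC by blast
  have e1: "dmult T a c = dpclass (M1 \<union> pat_tr be C, x, tile_tr be v)"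
    using dmult_eq[OF T a[unfolded aM] c[unfolded cC] compa[unfolded aM cC] be(1)] aM cC by simp
  have e2: "dmult T b c = dpclass (N \<union> pat_tr be C, x, tile_tr be v)"
    using dmult_eq[OF T b[unfolded bN] c[unfolded cC] comp[unfolded bN cC] be(1)] bN cC by simp
  have "dle (dmult T a c) (dmult T b c)" unfolding e1 e2 dle_iff
    using M1(2) by (intro exI[of _ 0]) auto
  then show ?thesis using compa by blast
qed



lemma requiv_end:
  assumes T: "tiles_nice T" and c: "c \<in> MII T" and c': "c' \<in> MII T"
    and pc: "placed S p c e" and pc': "placed S p c' e'"
    and r: "requiv T (ptclass (S,p)) c c'"
  shows "e = e'"
proof -
  obtain v where v: "is_unit T v" "occ v (ptclass (S,p))" "composable T v c" "composable T v c'"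
    "dmult T v c = dmult T v c'" using r unfolding requiv_def by blast
  have vM: "v \<in> MII T" using v(1) is_unit_def by blast
  obtain Kv where Kv: "(Kv,p,p) \<in> v" using v(2) occ_iff[OF vM] placed_def by metis
  have vK: "v = dpclass (Kv,p,p)" using MII_member vM Kv by blast
  obtain Kc where Kc: "(Kc,p,e) \<in> c" using pc placed_def by metis
  obtain Kc' where Kc': "(Kc',p,e') \<in> c'" using pc' placed_def by metis
  have cK: "c = dpclass (Kc,p,e)" using MII_member c Kc by blast
  have cK': "c' = dpclass (Kc',p,e')" using MII_member c' Kc' by blast
  have m1: "dmult T v c = dpclass (Kv \<union> Kc, p, e)"
    using dmult_eq[OF T vM[unfolded vK] c[unfolded cK], of 0] v(3) vK cK by simp
  have m2: "dmult T v c' = dpclass (Kv \<union> Kc', p, e')"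
    using dmult_eq[OF T vM[unfolded vK] c'[unfolded cK'], of 0] v(4) vK cK' by simp
  have g: "goodpat T Kv" "p \<in> Kv" using MII_member[OF vM Kv] by auto
  have np: "nice p" using goodpat_nice[OF T g] .
  obtain a where "Kv \<union> Kc' = pat_tr a (Kv \<union> Kc)" "p = tile_tr a p" "e' = tile_tr a e"
    using v(5) m1 m2 by (metis dpclass_eq_iff mem_dpclass)
  then show ?thesis using tile_tr_fix[OF np] by (metis tile_tr_0)
qed

lemma requiv_intro:
  assumes T: "tiles_nice T" and c: "c \<in> MII T" and c': "c' \<in> MII T" and v: "v \<in> MII T"
    and Kv: "(Kv,p,p) \<in> v" "Kv \<subseteq> S"
    and pc: "placed Kv p c e" and pc': "placed Kv p c' e"
  shows "requiv T (ptclass (S,p)) c c'"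
proof -
  have vK: "v = dpclass (Kv,p,p)" using MII_member v Kv by blast
  obtain Kc where Kc: "(Kc,p,e) \<in> c" "Kc \<subseteq> Kv" using pc placed_def by metis
  obtain Kc' where Kc': "(Kc',p,e) \<in> c'" "Kc' \<subseteq> Kv" using pc' placed_def by metis
  have cK: "c = dpclass (Kc,p,e)" using MII_member c Kc by blast
  have cK': "c' = dpclass (Kc',p,e)" using MII_member c' Kc' by blast
  obtain a where a: "pat_tr a Kv \<subseteq> T" using MII_member[OF v Kv(1)] goodpat_def by blast
  have u1: "Kv \<union> pat_tr 0 Kc = Kv" "Kv \<union> pat_tr 0 Kc' = Kv" using Kc Kc' by auto
  have comp1: "composable T v c"
    using composable_iff[OF T v[unfolded vK] c[unfolded cK]] vK cK a u1 by (metis tile_tr_0)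
  have comp2: "composable T v c'"
    using composable_iff[OF T v[unfolded vK] c'[unfolded cK']] vK cK' a u1 by (metis tile_tr_0)
  have m1: "dmult T v c = dpclass (Kv, p, e)"
    using dmult_eq[OF T v[unfolded vK] c[unfolded cK], of 0] comp1 vK cK u1 by simp
  have m2: "dmult T v c' = dpclass (Kv, p, e)"
    using dmult_eq[OF T v[unfolded vK] c'[unfolded cK'], of 0] comp2 vK cK' u1 by simp
  have "is_unit T v" using v vK unit_iff by blast
  moreover have "occ v (ptclass (S,p))" using occ_iff[OF v] Kv placed_def by blast
  ultimately show ?thesis unfolding requiv_def using comp1 comp2 m1 m2 by blast
qed

lemma act_eq:
  assumes T: "tiles_nice T" and c: "c \<in> MII T" and pc: "placed S p c e"
  shows "act (ptclass (S,p)) c = ptclass (S,e)"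
  unfolding act_def
proof (rule the_equality)
  show "\<exists>S' M x y. (S',x) \<in> ptclass (S,p) \<and> (M,x,y) \<in> c \<and> M \<subseteq> S' \<and> ptclass (S,e) = ptclass (S',y)"
    using pc unfolding placed_def by (metis ptclass_self)
next
  fix w assume "\<exists>S' M x y. (S',x) \<in> ptclass (S,p) \<and> (M,x,y) \<in> c \<and> M \<subseteq> S' \<and> w = ptclass (S',y)"
  then obtain S' M x y where h: "(S',x) \<in> ptclass (S,p)" "(M,x,y) \<in> c" "M \<subseteq> S'" "w = ptclass (S',y)"
    by blast
  obtain a where a: "S' = pat_tr a S" "x = tile_tr a p" using h(1) mem_ptclass by blast
  have "placed S' x c y" using h unfolding placed_def by blast
  then have "placed S p c (tile_tr (-a) y)" using placed_tr[OF c, of S' x y "-a"] a by simp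
  then have "tile_tr (-a) y = e" using placed_unique[OF T c pc] by blast
  then have "y = tile_tr a e" by (metis tile_tr_cancel(2))
  then show "w = ptclass (S,e)" using h(4) a by simp
qed

lemma rad_ball:
  assumes T: "tiles_nice T" and u: "u \<in> MII T" and r: "r < rad u" and K: "(K,x,y) \<in> u" and q: "q \<in> fst x"
  shows "ball q r \<subseteq> \<Union>(fst ` K)"
proof -
  define A where "A = {r. 0 \<le> r \<and> (\<forall>(M,x,y)\<in>u. \<forall>p\<in>fst x. ball p r \<subseteq> \<Union>(fst ` M))}"
  have radA: "rad u = Sup A" unfolding rad_def A_def by simp
  have g: "goodpat T K" "x \<in> K" using MII_member[OF u K] by auto
  have bK: "bounded (\<Union>(fst ` K))"
    using g goodpat_nice[OF T g(1)] by (auto simp: goodpat_def nice_def intro: bounded_Union)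
  then obtain B where B0: "\<forall>z\<in>\<Union>(fst ` K). dist q z \<le> B" using bounded_any_center by metis
  then have B: "\<Union>(fst ` K) \<subseteq> cball q B" unfolding mem_cball subset_eq by blast
  have B0': "0 \<le> B" using B0 q g(2) by (metis UN_I dist_self)
  have "0 \<in> A" unfolding A_def by auto
  moreover have "bdd_above A"
  proof (rule bdd_aboveI[of _ B])
    fix s assume "s \<in> A"
    then have "ball q s \<subseteq> \<Union>(fst ` K)" "0 \<le> s" using K q unfolding A_def by fastforce+
    then have "ball q s \<subseteq> cball q B" using B by blast
    then show "s \<le> B" using \<open>0 \<le> s\<close> ball_subset_cball_iff[of q s q B] B0' by (cases "s = 0") auto
  qed
  ultimately have "\<exists>s\<in>A. r < s" using less_cSup_iff[of A r] r radA by auto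
  then obtain s where s: "s \<in> A" "r < s" by blast
  then have "ball q s \<subseteq> \<Union>(fst ` K)" using K q unfolding A_def by fastforce
  moreover have "ball q r \<subseteq> ball q s" using s(2) by (intro subset_ball) simp
  ultimately show ?thesis by blast
qed


section \<open>Tiling-like sets\<close>

definition tprops :: "('n::finite,'l) tile \<Rightarrow> bool" where
  "tprops t \<longleftrightarrow> closed (fst t) \<and> fst t \<noteq> {} \<and> bounded (fst t) \<and> closure (interior (fst t)) = fst t"

definition tlk :: "('n::finite,'l) tile set \<Rightarrow> bool" where
  "tlk S \<longleftrightarrow> countable S \<and> (\<forall>t\<in>S. tprops t) \<and> \<Union>(fst ` S) = UNIV \<and>
     (\<forall>t\<in>S. \<forall>t'\<in>S. t \<noteq> t' \<longrightarrow> interior (fst t) \<inter> interior (fst t') = {})"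

lemma tlkD:
  assumes "tlk S"
  shows "countable S" "\<forall>t\<in>S. tprops t" "\<Union>(fst ` S) = UNIV"
    "\<forall>t\<in>S. \<forall>t'\<in>S. t \<noteq> t' \<longrightarrow> interior (fst t) \<inter> interior (fst t') = {}"
proof -
  note all = assms[unfolded tlk_def]
  show "countable S" using conjunct1[OF all] .
  show "\<forall>t\<in>S. tprops t" using conjunct1[OF conjunct2[OF all]] .
  show "\<Union>(fst ` S) = UNIV" using conjunct1[OF conjunct2[OF conjunct2[OF all]]] .
  show "\<forall>t\<in>S. \<forall>t'\<in>S. t \<noteq> t' \<longrightarrow> interior (fst t) \<inter> interior (fst t') = {}"
    using conjunct2[OF conjunct2[OF conjunct2[OF all]]] .
qed

lemma tlk_tile: "tlk S \<Longrightarrow> t \<in> S \<Longrightarrow> closed (fst t) \<and> fst t \<noteq> {} \<and> bounded (fst t) \<and> closure (interior (fst t)) = fst t"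
  using tlkD(2) tprops_def by blast

lemma tlk_cover: "tlk S \<Longrightarrow> \<exists>t\<in>S. z \<in> fst t"
  using tlkD(3) by (metis UNIV_I UN_E)

lemma tiling_tl: assumes "is_tiling S" shows "tlk S"
proof -
  note all = assms[unfolded is_tiling_def]
  have h1: "countable S" using conjunct1[OF all] .
  have h2: "\<forall>t\<in>S. bounded (fst t) \<and> closed (fst t) \<and> fst t \<noteq> {} \<and> closure (interior (fst t)) = fst t"
    using conjunct1[OF conjunct2[OF all]] .
  have h3: "\<Union>(fst ` S) = UNIV" using conjunct1[OF conjunct2[OF conjunct2[OF all]]] .
  have h4: "\<forall>t\<in>S. \<forall>t'\<in>S. t \<noteq> t' \<longrightarrow> interior (fst t) \<inter> interior (fst t') = {}"
    using conjunct1[OF conjunct2[OF conjunct2[OF conjunct2[OF all]]]] .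
  note h = h1 h2 h3 h4
  have "\<forall>t\<in>S. tprops t" using h(2) unfolding tprops_def by blast
  then show ?thesis unfolding tlk_def using h by blast
qed

lemma interior_tile_tr: "interior (fst (tile_tr a t)) = (\<lambda>x. a + x) ` interior (fst t)"
  by (simp add: fst_tile_tr interior_translation)

lemma tprops_tr: assumes "tprops t" shows "tprops (tile_tr a t)"
proof -
  have "closure (interior ((+) a ` fst t)) = (+) a ` closure (interior (fst t))"
    by (simp only: interior_translation closure_translation)
  then show ?thesis using assms unfolding tprops_def fst_tile_tr
    by (simp add: closed_translation bounded_translation)
qed

lemma tprops_nice: "tprops t \<Longrightarrow> nice t"
  unfolding tprops_def nice_def by blast

lemma tprops_interior: "tprops t \<Longrightarrow> interior (fst t) \<noteq> {}"
  unfolding tprops_def by (metis closure_empty)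

lemma tl_tr: assumes "tlk S" shows "tlk (pat_tr a S)"
proof -
  have c: "countable (pat_tr a S)" using countable_pat_tr tlkD(1)[OF assms] by blast
  have p: "\<forall>t\<in>pat_tr a S. tprops t" using tlkD(2)[OF assms] unfolding pat_tr_def by (auto intro: tprops_tr)
  have u: "\<Union>(fst ` pat_tr a S) = UNIV"
  proof -
    have "\<Union>(fst ` pat_tr a S) = (\<lambda>x. a + x) ` UNIV" using tlkD(3)[OF assms] unfolding pat_tr_Union_fst by simp
    also have "\<dots> = UNIV" by (metis surj_plus)
    finally show ?thesis .
  qed
  have d: "\<forall>t\<in>pat_tr a S. \<forall>t'\<in>pat_tr a S. t \<noteq> t' \<longrightarrow> interior (fst t) \<inter> interior (fst t') = {}"
  proof (intro ballI impI)
    fix t t' assume h: "t \<in> pat_tr a S" "t' \<in> pat_tr a S" "t \<noteq> t'"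
    then obtain s s' where s: "s \<in> S" "s' \<in> S" "t = tile_tr a s" "t' = tile_tr a s'" unfolding pat_tr_def by blast
    then have "s \<noteq> s'" using h by blast
    then have "interior (fst s) \<inter> interior (fst s') = {}" using tlkD(4)[OF assms] s by blast
    then show "interior (fst t) \<inter> interior (fst t') = {}" unfolding s interior_tile_tr by auto
  qed
  show ?thesis unfolding tlk_def using c p u d by blast
qed

lemma KEY:
  assumes S: "tlk S" and t: "t \<in> S" and P: "P \<subseteq> S" "t \<notin> P" and Op: "open Op" "Op \<noteq> {}" "Op \<subseteq> fst t"
    and cov: "Op \<subseteq> \<Union>(fst ` P)"
  shows False
proof -
  define G where "G = (\<lambda>t'. fst t' \<inter> fst t) ` P"
  have cS: "countable S" using tlkD(1)[OF S] .
  have "countable P" using countable_subset[OF P(1) cS] .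
  then have cG: "countable G" unfolding G_def by simp
  have dis: "\<forall>t\<in>S. \<forall>t'\<in>S. t \<noteq> t' \<longrightarrow> interior (fst t) \<inter> interior (fst t') = {}"
    using tlkD(4)[OF S] .
  have clo: "\<forall>t\<in>S. closed (fst t)" using tlk_tile[OF S] by blast
  have gG: "closedin euclidean g \<and> euclidean interior_of g = {}" if "g \<in> G" for g
  proof -
    obtain t' where t': "t' \<in> P" "g = fst t' \<inter> fst t" using \<open>g \<in> G\<close> G_def by blast
    have tS: "t' \<in> S" using t' P by blast
    have "t' \<noteq> t" using t' P by blast
    have "closed (fst t')" "closed (fst t)" using clo tS t by blast+
    then have "closed g" using t' by (simp add: closed_Int)
    moreover have "interior (fst t') \<inter> interior (fst t) = {}" using dis tS t \<open>t' \<noteq> t\<close> by blast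
    then have "interior g = {}" using t' by (simp add: interior_Int)
    ultimately show ?thesis by simp
  qed
  have "euclidean interior_of \<Union>G = {}"
    by (rule Baire_category_alt[OF _ cG]) (use completely_metrizable_space_euclidean gG in auto)
  then have "interior (\<Union>G) = {}" by simp
  moreover have "Op \<subseteq> \<Union>G"
  proof
    fix z assume z: "z \<in> Op"
    then obtain t' where "t' \<in> P" "z \<in> fst t'" using cov by blast
    moreover have "z \<in> fst t" using z Op by blast
    ultimately show "z \<in> \<Union>G" unfolding G_def by blast
  qed
  ultimately have "Op \<subseteq> {}" using Op(1) interior_maximal by blast
  then show False using Op by blast
qed

section \<open>The minimal patterns M_r\<close>

definition P0 :: "real \<Rightarrow> ('n::finite,'l) tile set \<Rightarrow> ('n,'l) tile \<Rightarrow> ('n,'l) tile set" where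
  "P0 r S p = insert p {t\<in>S. interior (fst t) \<inter> (\<Union>q\<in>fst p. ball q r) \<noteq> {}}"

lemma ball_tr: "(\<Union>q\<in>fst (tile_tr a p). ball q r) = (\<lambda>x. a + x) ` (\<Union>q\<in>fst p. ball q r)"
proof -
  have "ball (a + q) r = (\<lambda>x. a + x) ` ball q r" for q
    by (rule ball_translation)
  then have "(\<Union>q\<in>fst (tile_tr a p). ball q r) = (\<Union>q\<in>fst p. (\<lambda>x. a + x) ` ball q r)"
    by (simp add: fst_tile_tr)
  also have "\<dots> = (\<lambda>x. a + x) ` (\<Union>q\<in>fst p. ball q r)" by (rule image_UN[symmetric])
  finally show ?thesis .
qed

lemma P0_tr: fixes S :: "('n::finite,'l) tile set" shows "P0 r (pat_tr a S) (tile_tr a p) = pat_tr a (P0 r S p)"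
proof -
  have cnd: "interior (fst (tile_tr a t)) \<inter> (\<Union>q\<in>fst (tile_tr a p). ball q r) \<noteq> {} \<longleftrightarrow>
        interior (fst t) \<inter> (\<Union>q\<in>fst p. ball q r) \<noteq> {}" for t
    unfolding interior_tile_tr ball_tr by auto
  show ?thesis
  proof (rule set_eqI)
    fix t :: "('n,'l) tile"
    have e: "t = tile_tr a (tile_tr (-a) t)" by simp
    have "t \<in> P0 r (pat_tr a S) (tile_tr a p) \<longleftrightarrow> t = tile_tr a p \<or> (t \<in> pat_tr a S \<and>
       interior (fst (tile_tr a (tile_tr (-a) t))) \<inter> (\<Union>q\<in>fst (tile_tr a p). ball q r) \<noteq> {})"
      unfolding P0_def by simp
    also have "\<dots> \<longleftrightarrow> tile_tr (-a) t = p \<or> (tile_tr (-a) t \<in> S \<and>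
       interior (fst (tile_tr (-a) t)) \<inter> (\<Union>q\<in>fst p. ball q r) \<noteq> {})"
    proof -
      have "t = tile_tr a p \<longleftrightarrow> tile_tr (-a) t = p" by auto
      then show ?thesis unfolding cnd pat_tr_mem by simp
    qed
    also have "\<dots> \<longleftrightarrow> t \<in> pat_tr a (P0 r S p)" unfolding pat_tr_mem P0_def by simp
    finally show "t \<in> P0 r (pat_tr a S) (tile_tr a p) \<longleftrightarrow> t \<in> pat_tr a (P0 r S p)" .
  qed
qed

lemma P0_cover:
  assumes S: "tlk S" and q: "q \<in> fst p"
  shows "ball q r \<subseteq> \<Union>(fst ` P0 r S p)"
proof
  fix z assume z: "z \<in> ball q r"
  obtain t where t: "t \<in> S" "z \<in> fst t" using tlk_cover[OF S] by blast
  have "z \<in> closure (interior (fst t))" using tlk_tile[OF S t(1)] t by simp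
  then have "ball q r \<inter> closure (interior (fst t)) \<noteq> {}" using z by blast
  then have "interior (fst t) \<inter> ball q r \<noteq> {}"
    using open_Int_closure_eq_empty[of "ball q r" "interior (fst t)"] by auto
  then have "t \<in> P0 r S p" unfolding P0_def using t q by blast
  then show "z \<in> \<Union>(fst ` P0 r S p)" using t by blast
qed

lemma P0_min:
  assumes S: "tlk S" and P: "P \<subseteq> S" "p \<in> P" and cov: "\<forall>q\<in>fst p. ball q r \<subseteq> \<Union>(fst ` P)"
  shows "P0 r S p \<subseteq> P"
proof
  fix t assume "t \<in> P0 r S p"
  then consider "t = p" | "t \<in> S" "interior (fst t) \<inter> (\<Union>q\<in>fst p. ball q r) \<noteq> {}" unfolding P0_def by blast
  then show "t \<in> P"
  proof cases
    case 1 then show ?thesis using P by blast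
  next
    case 2
    show ?thesis
    proof (rule ccontr)
      assume "t \<notin> P"
      have op: "open (interior (fst t) \<inter> (\<Union>q\<in>fst p. ball q r))" by (intro open_Int open_interior open_UN ballI open_ball)
      show False
        apply (rule KEY[OF S 2(1) P(1) \<open>t \<notin> P\<close> op])
        using 2 cov interior_subset by auto
    qed
  qed
qed

lemma Mr_rep_eq:
  assumes S: "tlk S" and p: "p \<in> S"
  shows "Mr_rep r S p = P0 r S p"
proof -
  let ?Q = "\<lambda>P. P \<subseteq> S \<and> p \<in> P \<and> (\<forall>q\<in>fst p. ball q r \<subseteq> \<Union>(fst ` P))"
  have a: "P0 r S p \<subseteq> S" "p \<in> P0 r S p" using p unfolding P0_def by auto
  have c: "\<forall>q\<in>fst p. ball q r \<subseteq> \<Union> (fst ` P0 r S p)" using P0_cover[OF S] by blast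
  have Q0: "?Q (P0 r S p)" using a c by (intro conjI)
  have d: "\<forall>P'. ?Q P' \<longrightarrow> P0 r S p \<subseteq> P'"
  proof (intro allI impI)
    fix P' assume "?Q P'"
    then show "P0 r S p \<subseteq> P'" using P0_min[OF S] by (elim conjE) blast
  qed
  have "Mr_rep r S p = (THE P. ?Q P \<and> (\<forall>P'. ?Q P' \<longrightarrow> P \<subseteq> P'))"
    unfolding Mr_rep_def by (simp only: conj_assoc)
  also have "\<dots> = P0 r S p"
  proof (rule the_equality)
    show "?Q (P0 r S p) \<and> (\<forall>P'. ?Q P' \<longrightarrow> P0 r S p \<subseteq> P')" by (rule conjI[OF Q0 d])
  next
    fix P assume h: "?Q P \<and> (\<forall>P'. ?Q P' \<longrightarrow> P \<subseteq> P')"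
    then have "?Q P" by (rule conjunct1)
    then have "P0 r S p \<subseteq> P" using d by blast
    moreover have "P \<subseteq> P0 r S p" using conjunct2[OF h] Q0 by blast
    ultimately show "P = P0 r S p" by (rule subset_antisym[rotated])
  qed
  finally show ?thesis .
qed

lemma Mr_eq:
  assumes S: "tlk S" and p: "p \<in> S"
  shows "Mr r (ptclass (S,p)) = ptclass (P0 r S p, p)"
proof -
  define sp where "sp = (SOME sp. sp \<in> ptclass (S,p))"
  have "sp \<in> ptclass (S,p)" unfolding sp_def by (rule someI[of _ "(S,p)"]) simp
  then obtain a where a: "sp = (pat_tr a S, tile_tr a p)" by (cases sp) (auto simp: mem_ptclass)
  have "Mr_rep r (fst sp) (snd sp) = pat_tr a (P0 r S p)"
    using a Mr_rep_eq[OF tl_tr[OF S, of a]] p P0_tr by simp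
  then show ?thesis unfolding Mr_def Let_def sp_def[symmetric] using a by simp
qed

lemma P0_local:
  assumes S: "tlk S" and W: "W \<subseteq> S" "p \<in> W" and cov: "\<forall>q\<in>fst p. ball q r \<subseteq> \<Union>(fst ` W)"
  shows "P0 r S p = P0 r W p"
proof -
  have "t \<in> W" if "t \<in> S" "interior (fst t) \<inter> (\<Union>q\<in>fst p. ball q r) \<noteq> {}" for t
  proof (rule ccontr)
    assume "t \<notin> W"
    have op: "open (interior (fst t) \<inter> (\<Union>q\<in>fst p. ball q r))" by (intro open_Int open_interior open_UN ballI open_ball)
    show False
      apply (rule KEY[OF S that(1) W(1) \<open>t \<notin> W\<close> op])
      using that cov interior_subset by auto
  qed
  then show ?thesis unfolding P0_def using W by blast
qed


lemma tilingD:
  assumes "is_tiling T"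
  shows "tlk T" "tiles_nice T"
    "\<exists>F. finite F \<and> (\<forall>t\<in>T. \<forall>t'\<in>T. t \<noteq> t' \<and> fst t \<inter> fst t' \<noteq> {} \<longrightarrow>
             (\<exists>(s,s')\<in>F. \<exists>a. t = tile_tr a s \<and> t' = tile_tr a s'))"
proof -
  note all = assms[unfolded is_tiling_def]
  show "tlk T" using tiling_tl[OF assms] .
  show "tiles_nice T" using tiling_nice[OF assms] .
  show "\<exists>F. finite F \<and> (\<forall>t\<in>T. \<forall>t'\<in>T. t \<noteq> t' \<and> fst t \<inter> fst t' \<noteq> {} \<longrightarrow>
             (\<exists>(s,s')\<in>F. \<exists>a. t = tile_tr a s \<and> t' = tile_tr a s'))"
    using conjunct2[OF conjunct2[OF conjunct2[OF conjunct2[OF all]]]] .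
qed

lemma approx_seqD:
  assumes "approx_seq T A v"
  shows "\<And>n. v n \<in> A" "\<And>n. is_unit T (v n)" "\<And>k. composable T (iprod T v k) (v (Suc k))"
    "filterlim (\<lambda>n. rad (v n)) at_top sequentially"
  using assms unfolding approx_seq_def by blast+

lemma rad_ev:
  assumes "filterlim (\<lambda>n. rad (v n)) at_top sequentially"
  shows "\<forall>\<^sub>F n in sequentially. R < rad (v n)"
proof -
  have "\<forall>\<^sub>F n in sequentially. R + 1 \<le> rad (v n)" using assms[unfolded filterlim_at_top] by blast
  then show ?thesis by (rule eventually_mono) simp
qed

lemma interior_disj_tr:
  assumes "interior (fst (tile_tr a t)) \<inter> interior (fst (tile_tr a t')) = {}"
  shows "interior (fst t) \<inter> interior (fst t') = {}"
  using assms unfolding interior_tile_tr by blast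

lemma limit_construction:
  assumes T: "is_tiling T" and v: "approx_seq T (MII T) v"
  shows "\<exists>S x0 V. tlk S \<and> is_tiling S \<and> x0 \<in> S \<and> (\<forall>n. (V n, x0, x0) \<in> v n \<and> V n \<subseteq> S) \<and>
     slim v = ptclass (S,x0) \<and>
     (\<forall>\<omega>. is_ptclass \<omega> \<and> (\<forall>n. occ (v n) \<omega>) \<longrightarrow> \<omega> = ptclass (S,x0)) \<and>
     ptclass (S,x0) \<in> Omega T \<and>
     (\<forall>F. finite F \<and> F \<subseteq> S \<longrightarrow> (\<forall>\<^sub>F n in sequentially. F \<subseteq> V n)) \<and>
     (\<forall>R. \<forall>\<^sub>F n in sequentially. \<forall>q\<in>fst x0. ball q R \<subseteq> \<Union>(fst ` V n))"
proof -
  have Tn: "tiles_nice T" and Tl: "tlk T" using tilingD[OF T] by blast+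
  note vD = approx_seqD[OF v]
  have vM: "v n \<in> MII T" for n using vD(1) by blast
  obtain M0 x0 y0 where M0: "v 0 = dpclass (M0,x0,y0)" "goodpat T M0" "x0 \<in> M0" "y0 \<in> M0"
    using MII_obtain[OF vM[of 0]] by blast
  have "y0 = x0" using unit_iff[of M0 x0 y0 T] vD(2)[of 0] vM[of 0] M0(1) by simp
  then have M0': "v 0 = dpclass (M0,x0,x0)" using M0 by simp
  have nx0: "nice x0" using goodpat_nice[OF Tn M0(2,3)] .
  define V where "V n = (THE K. (K,x0,x0) \<in> v n)" for n
  have Vchar: "V n = K" if "(K,x0,x0) \<in> v n" for n K
    unfolding V_def
  proof (rule the_equality)
    show "(K,x0,x0) \<in> v n" using that .
    fix K' assume "(K',x0,x0) \<in> v n"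
    then show "K' = K" using placed_unique_pat[OF Tn vM that] by blast
  qed
  define P where "P k = (\<Union>n\<in>{..k}. V n)" for k
  have V0: "V 0 = M0" using Vchar[of M0 0] M0' by simp
  have ind: "(V k, x0, x0) \<in> v k \<and> iprod T v k = dpclass (P k, x0, x0) \<and> goodpat T (P k)" for k
  proof (induction k)
    case 0
    have "P 0 = M0" unfolding P_def using V0 by simp
    then show ?case using V0 M0' M0(2) by simp
  next
    case (Suc k)
    have x0P: "x0 \<in> P k" unfolding P_def using V0 M0(3) by blast
    have cM: "dpclass (P k, x0, x0) \<in> MII T" using Suc x0P by (simp add: MII_iff)
    obtain M x y where Mx: "v (Suc k) = dpclass (M,x,y)" "goodpat T M" "x \<in> M" "y \<in> M"
      using MII_obtain[OF vM[of "Suc k"]] by blast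
    have "y = x" using unit_iff[of M x y T] vD(2)[of "Suc k"] vM[of "Suc k"] Mx(1) by simp
    then have Mx': "v (Suc k) = dpclass (M,x,x)" using Mx by simp
    have vMx: "dpclass (M,x,x) \<in> MII T" using Mx' vM by metis
    have comp: "composable T (dpclass (P k, x0, x0)) (dpclass (M,x,x))"
      using vD(3)[of k] Suc Mx' by simp
    obtain b a where b: "tile_tr b x = x0" "pat_tr a (P k \<union> pat_tr b M) \<subseteq> T"
      using composable_iff[OF Tn cM vMx] comp by blast
    have prod: "iprod T v (Suc k) = dpclass (P k \<union> pat_tr b M, x0, x0)"
      using dmult_eq[OF Tn cM vMx comp b(1)] Suc Mx' b(1) by simp
    have "(pat_tr b M, x0, x0) \<in> v (Suc k)" unfolding Mx' mem_dpclass using b(1) by blast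
    moreover then have VS: "V (Suc k) = pat_tr b M" using Vchar by blast
    moreover have "P (Suc k) = P k \<union> V (Suc k)" unfolding P_def by (simp add: atMost_Suc Un_commute)
    moreover have "goodpat T (P k \<union> pat_tr b M)"
      using Suc b Mx(2) unfolding goodpat_def by auto
    ultimately show ?case using prod by simp
  qed
  have Vv: "(V n, x0, x0) \<in> v n" for n using ind by blast
  have gP: "goodpat T (P k)" for k using ind by blast
  have VP: "V n \<subseteq> P k" if "n \<le> k" for n k unfolding P_def using that by blast
  have finV: "finite (V n)" for n using gP[of n] VP[of n n] finite_subset unfolding goodpat_def by blast
  define S where "S = (\<Union>n. V n)"
  have VS: "V n \<subseteq> S" for n unfolding S_def by blast
  have x0S: "x0 \<in> S" using VS[of 0] V0 M0(3) by blast
  have pair: "\<exists>a. tile_tr a t \<in> T \<and> tile_tr a t' \<in> T" if tt: "t \<in> S" "t' \<in> S" for t t'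
  proof -
    obtain i j where ij: "t \<in> V i" "t' \<in> V j" using tt unfolding S_def by blast
    have "t \<in> P (max i j)" "t' \<in> P (max i j)" using ij VP[of i "max i j"] VP[of j "max i j"] by auto
    moreover obtain a where "pat_tr a (P (max i j)) \<subseteq> T" using gP unfolding goodpat_def by blast
    ultimately show ?thesis by (metis in_pat_tr subsetD)
  qed
  have tpS: "tprops t" if tS: "t \<in> S" for t
  proof -
    obtain a where "tile_tr a t \<in> T" using pair[OF tS tS] by blast
    then have "tprops (tile_tr a t)" using tlkD(2)[OF Tl] by blast
    then have "tprops (tile_tr (-a) (tile_tr a t))" by (rule tprops_tr)
    then show ?thesis by simp
  qed
  have cntS: "countable S" unfolding S_def using finV by (simp add: countable_finite)
  have radv: "\<forall>\<^sub>F n in sequentially. R < rad (v n)" for R using rad_ev[OF vD(4)] .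
  have ballV: "\<forall>\<^sub>F n in sequentially. \<forall>q\<in>fst x0. ball q R \<subseteq> \<Union>(fst ` V n)" for R
    using radv[of R] by (rule eventually_mono) (use rad_ball[OF Tn vM _ Vv] in blast)
  obtain q0 where q0: "q0 \<in> fst x0" using nx0 unfolding nice_def by blast
  have unS: "\<Union>(fst ` S) = UNIV"
  proof -
    have "z \<in> \<Union>(fst ` S)" for z
    proof -
      obtain n where "\<forall>q\<in>fst x0. ball q (dist q0 z + 1) \<subseteq> \<Union>(fst ` V n)"
        using eventually_happens'[OF sequentially_bot ballV] by blast
      then have "ball q0 (dist q0 z + 1) \<subseteq> \<Union>(fst ` V n)" using q0 by blast
      moreover have "z \<in> ball q0 (dist q0 z + 1)" by simp
      ultimately show ?thesis using VS by blast
    qed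
    then show ?thesis by blast
  qed
  have disS: "\<forall>t\<in>S. \<forall>t'\<in>S. t \<noteq> t' \<longrightarrow> interior (fst t) \<inter> interior (fst t') = {}"
  proof (intro ballI impI)
    fix t t' assume h: "t \<in> S" "t' \<in> S" "t \<noteq> t'"
    obtain a where a: "tile_tr a t \<in> T" "tile_tr a t' \<in> T" using pair[OF h(1,2)] by blast
    have "tile_tr a t \<noteq> tile_tr a t'" using h(3) by simp
    then have "interior (fst (tile_tr a t)) \<inter> interior (fst (tile_tr a t')) = {}"
      using tlkD(4)[OF Tl] a by blast
    then show "interior (fst t) \<inter> interior (fst t') = {}" by (rule interior_disj_tr)
  qed
  have tlS: "tlk S" unfolding tlk_def using cntS tpS unS disS by blast
  have flcS: "\<exists>F. finite F \<and> (\<forall>t\<in>S. \<forall>t'\<in>S. t \<noteq> t' \<and> fst t \<inter> fst t' \<noteq> {} \<longrightarrow>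
             (\<exists>(s,s')\<in>F. \<exists>a. t = tile_tr a s \<and> t' = tile_tr a s'))"
  proof -
    obtain F where F: "finite F" "\<forall>t\<in>T. \<forall>t'\<in>T. t \<noteq> t' \<and> fst t \<inter> fst t' \<noteq> {} \<longrightarrow>
             (\<exists>(s,s')\<in>F. \<exists>a. t = tile_tr a s \<and> t' = tile_tr a s')" using tilingD(3)[OF T] by blast
    have "\<exists>(s,s')\<in>F. \<exists>a. t = tile_tr a s \<and> t' = tile_tr a s'"
      if h: "t \<in> S" "t' \<in> S" "t \<noteq> t'" "fst t \<inter> fst t' \<noteq> {}" for t t'
    proof -
      obtain a where a: "tile_tr a t \<in> T" "tile_tr a t' \<in> T" using pair[OF h(1,2)] by blast
      have "tile_tr a t \<noteq> tile_tr a t'" using h(3) by simp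
      moreover have "fst (tile_tr a t) \<inter> fst (tile_tr a t') \<noteq> {}" using h(4) unfolding fst_tile_tr by blast
      ultimately have "\<exists>(s,s')\<in>F. \<exists>b. tile_tr a t = tile_tr b s \<and> tile_tr a t' = tile_tr b s'"
        using F(2) a by blast
      then obtain s s' b where "(s,s') \<in> F" "tile_tr a t = tile_tr b s" "tile_tr a t' = tile_tr b s'" by blast
      then have "(s,s') \<in> F" "t = tile_tr (-a + b) s" "t' = tile_tr (-a + b) s'"
        by (metis tile_tr_add tile_tr_cancel(1))+
      then show ?thesis by blast
    qed
    then show ?thesis using F(1) by blast
  qed
  have tilS: "is_tiling S"
  proof -
    have "\<forall>t\<in>S. bounded (fst t) \<and> closed (fst t) \<and> fst t \<noteq> {} \<and> closure (interior (fst t)) = fst t"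
      using tpS unfolding tprops_def by blast
    then show ?thesis unfolding is_tiling_def using cntS unS disS flcS by (intro conjI)
  qed
  have occS: "occ (v n) (ptclass (S,x0))" for n
    using occ_iff[OF vM] Vv VS unfolding placed_def by blast
  have uniq: "\<omega> = ptclass (S,x0)" if h: "is_ptclass \<omega>" "\<forall>n. occ (v n) \<omega>" for \<omega>
  proof -
    obtain S2 p2 where S2: "is_tiling S2" "p2 \<in> S2" "\<omega> = ptclass (S2,p2)" using h(1) is_ptclass_def by blast
    have "placed S2 p2 (v 0) p2" using h(2) occ_iff[OF vM] S2(3) by blast
    then obtain K where K: "(K,p2,p2) \<in> v 0" unfolding placed_def by blast
    then obtain a where a: "p2 = tile_tr a x0" using M0' mem_dpclass by blast
    define S3 where "S3 = pat_tr (-a) S2"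
    have om: "\<omega> = ptclass (S3, x0)" unfolding S3_def S2(3)
      using ptclass_tr[of "-a" S2 p2] a by simp
    have tl3: "tlk S3" unfolding S3_def using tl_tr tiling_tl[OF S2(1)] by blast
    have sub: "V n \<subseteq> S3" for n
    proof -
      have "placed S3 x0 (v n) x0" using h(2) occ_iff[OF vM] om by blast
      then obtain K where "(K,x0,x0) \<in> v n" "K \<subseteq> S3" unfolding placed_def by blast
      then show ?thesis using Vchar by blast
    qed
    then have "S \<subseteq> S3" unfolding S_def by blast
    moreover have "S3 \<subseteq> S"
    proof
      fix t assume t: "t \<in> S3"
      show "t \<in> S"
      proof (rule ccontr)
        assume "t \<notin> S"
        have tp: "tprops t" using tlkD(2)[OF tl3] t by blast
        show False
          by (rule KEY[OF tl3 t \<open>S \<subseteq> S3\<close> \<open>t \<notin> S\<close> open_interior tprops_interior[OF tp] interior_subset])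
             (use unS in blast)
      qed
    qed
    ultimately show ?thesis using om by simp
  qed
  have slim: "slim v = ptclass (S,x0)"
    unfolding slim_def
  proof (rule the_equality)
    show "is_ptclass (ptclass (S,x0)) \<and> (\<forall>n. occ (v n) (ptclass (S,x0)))"
      using tilS x0S occS unfolding is_ptclass_def by blast
  next
    fix \<omega> assume "is_ptclass \<omega> \<and> (\<forall>n. occ (v n) \<omega>)"
    then show "\<omega> = ptclass (S,x0)" using uniq by blast
  qed
  have omega: "ptclass (S,x0) \<in> Omega T"
  proof -
    have "\<exists>x\<in>T. Mr r (ptclass (S,x0)) = Mr r (ptclass (T,x))" if r: "r \<ge> 0" for r
    proof -
      obtain n where n: "r < rad (v n)" using eventually_happens'[OF sequentially_bot radv[of r]] by blast
      obtain M x y where Mx: "v n = dpclass (M,x,y)" "is_pattern T M" "x \<in> M" "y \<in> M"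
        using vM[of n] unfolding MII_def by blast
      have "y = x" using unit_iff[of M x y T] vD(2)[of n] vM[of n] Mx(1) by simp
      then have Mx': "v n = dpclass (M,x,x)" using Mx by simp
      obtain a where a: "V n = pat_tr a M" "x0 = tile_tr a x" using Vv[of n] Mx' mem_dpclass by blast
      have MT: "M \<subseteq> T" "x \<in> T" using Mx(2,3) unfolding is_pattern_def by blast+
      have cov1: "\<forall>q\<in>fst x0. ball q r \<subseteq> \<Union>(fst ` V n)" using rad_ball[OF Tn vM n Vv] by blast
      have cov2: "\<forall>q\<in>fst x. ball q r \<subseteq> \<Union>(fst ` M)"
        using rad_ball[OF Tn vM n, of M x x] Mx' by simp
      have x0V: "x0 \<in> V n" using a Mx(3) by simp
      have "Mr r (ptclass (S,x0)) = ptclass (P0 r S x0, x0)" using Mr_eq[OF tlS x0S] .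
      also have "P0 r S x0 = P0 r (V n) x0" using P0_local[OF tlS VS x0V cov1] .
      also have "\<dots> = pat_tr a (P0 r M x)" unfolding a by (rule P0_tr)
      also have "ptclass (pat_tr a (P0 r M x), x0) = ptclass (P0 r M x, x)" using a by simp
      also have "P0 r M x = P0 r T x" using P0_local[OF Tl MT(1) Mx(3) cov2] by simp
      also have "ptclass (P0 r T x, x) = Mr r (ptclass (T,x))" using Mr_eq[OF Tl MT(2)] by simp
      finally show ?thesis using MT(2) by blast
    qed
    moreover have "is_ptclass (ptclass (S,x0))" using tilS x0S unfolding is_ptclass_def by blast
    ultimately show ?thesis unfolding Omega_def by blast
  qed
  have big: "\<forall>\<^sub>F n in sequentially. F \<subseteq> V n" if F: "finite F" "F \<subseteq> S" for F
  proof -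
    have "\<forall>t\<in>F. bounded (fst t)" using F tpS unfolding tprops_def by blast
    then have "bounded (\<Union>(fst ` F))" using F(1) by (intro bounded_Union) auto
    then obtain B where B: "\<forall>z\<in>\<Union>(fst ` F). dist q0 z \<le> B" using bounded_any_center by metis
    show ?thesis using ballV[of "B + 1"]
    proof (rule eventually_mono)
      fix n assume n: "\<forall>q\<in>fst x0. ball q (B + 1) \<subseteq> \<Union>(fst ` V n)"
      show "F \<subseteq> V n"
      proof
        fix t assume t: "t \<in> F"
        have tS: "t \<in> S" using t F by blast
        show "t \<in> V n"
        proof (rule ccontr)
          assume nt: "t \<notin> V n"
          have tp: "tprops t" using tpS tS by blast
          have "fst t \<subseteq> ball q0 (B + 1)" using B t by fastforce
          then have "fst t \<subseteq> \<Union>(fst ` V n)" using n q0 by blast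
          then show False
            by (rule KEY[OF tlS tS VS nt open_interior tprops_interior[OF tp] interior_subset,
                  OF subset_trans[OF interior_subset]])
        qed
      qed
    qed
  qed
  have c4: "\<forall>n. (V n, x0, x0) \<in> v n \<and> V n \<subseteq> S" using Vv VS by blast
  have c6: "\<forall>\<omega>. is_ptclass \<omega> \<and> (\<forall>n. occ (v n) \<omega>) \<longrightarrow> \<omega> = ptclass (S,x0)" using uniq by blast
  have c8: "\<forall>F. finite F \<and> F \<subseteq> S \<longrightarrow> (\<forall>\<^sub>F n in sequentially. F \<subseteq> V n)" using big by blast
  have c9: "\<forall>R. \<forall>\<^sub>F n in sequentially. \<forall>q\<in>fst x0. ball q R \<subseteq> \<Union>(fst ` V n)" using ballV by blast
  show ?thesis
    apply (rule exI[of _ S], rule exI[of _ x0], rule exI[of _ V])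
    using tlS tilS x0S c4 slim c6 omega c8 c9 by (intro conjI)
qed


definition frame :: "('n::finite,'l) tile set \<Rightarrow> (nat \<Rightarrow> ('n,'l) dpat set) \<Rightarrow> ('n,'l) tile set \<Rightarrow> ('n,'l) tile \<Rightarrow> (nat \<Rightarrow> ('n,'l) tile set) \<Rightarrow> bool" where
  "frame T v S x0 V \<longleftrightarrow> tlk S \<and> is_tiling S \<and> x0 \<in> S \<and> (\<forall>n. (V n, x0, x0) \<in> v n \<and> V n \<subseteq> S) \<and>
     slim v = ptclass (S,x0) \<and>
     (\<forall>\<omega>. is_ptclass \<omega> \<and> (\<forall>n. occ (v n) \<omega>) \<longrightarrow> \<omega> = ptclass (S,x0)) \<and>
     ptclass (S,x0) \<in> Omega T \<and>
     (\<forall>F. finite F \<and> F \<subseteq> S \<longrightarrow> (\<forall>\<^sub>F n in sequentially. F \<subseteq> V n)) \<and>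
     (\<forall>R. \<forall>\<^sub>F n in sequentially. \<forall>q\<in>fst x0. ball q R \<subseteq> \<Union>(fst ` V n))"

lemma frame_exists: "is_tiling T \<Longrightarrow> approx_seq T (MII T) v \<Longrightarrow> \<exists>S x0 V. frame T v S x0 V"
  unfolding frame_def by (rule limit_construction)

lemma frameD:
  assumes "frame T v S x0 V"
  shows "tlk S" "is_tiling S" "x0 \<in> S" "\<And>n. (V n, x0, x0) \<in> v n" "\<And>n. V n \<subseteq> S"
    "slim v = ptclass (S,x0)"
    "\<And>\<omega>. is_ptclass \<omega> \<Longrightarrow> (\<forall>n. occ (v n) \<omega>) \<Longrightarrow> \<omega> = ptclass (S,x0)"
    "ptclass (S,x0) \<in> Omega T"
    "\<And>F. finite F \<Longrightarrow> F \<subseteq> S \<Longrightarrow> (\<forall>\<^sub>F n in sequentially. F \<subseteq> V n)"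
proof -
  note a = assms[unfolded frame_def]
  note a1 = conjunct2[OF conjunct2[OF conjunct2[OF a]]]
  note a2 = conjunct2[OF conjunct2[OF conjunct2[OF a1]]]
  show "tlk S" using conjunct1[OF a] .
  show "is_tiling S" using conjunct1[OF conjunct2[OF a]] .
  show "x0 \<in> S" using conjunct1[OF conjunct2[OF conjunct2[OF a]]] .
  show "(V n, x0, x0) \<in> v n" for n using conjunct1[OF a1] by blast
  show "V n \<subseteq> S" for n using conjunct1[OF a1] by blast
  show "slim v = ptclass (S,x0)" using conjunct1[OF conjunct2[OF a1]] .
  show "\<omega> = ptclass (S,x0)" if "is_ptclass \<omega>" "\<forall>n. occ (v n) \<omega>" for \<omega>
    using conjunct1[OF conjunct2[OF conjunct2[OF a1]]] that by blast
  show "ptclass (S,x0) \<in> Omega T" using conjunct1[OF a2] .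
  show "\<forall>\<^sub>F n in sequentially. F \<subseteq> V n" if "finite F" "F \<subseteq> S" for F
    using conjunct1[OF conjunct2[OF a2]] that by blast
qed

lemma approx_mono: "approx_seq T A v \<Longrightarrow> A \<subseteq> B \<Longrightarrow> approx_seq T B v"
  unfolding approx_seq_def by blast

lemma Omega_ptclass: "\<omega> \<in> Omega T \<Longrightarrow> \<exists>S p. is_tiling S \<and> p \<in> S \<and> \<omega> = ptclass (S,p)"
  unfolding Omega_def is_ptclass_def by blast

section \<open>Generic facts on R\<close>

lemma requiv_refl:
  assumes T: "tiles_nice T" and c: "c \<in> MII T" and pc: "placed S p c e"
  shows "requiv T (ptclass (S,p)) c c"
proof -
  obtain K where K: "(K,p,e) \<in> c" "K \<subseteq> S" using pc placed_def by blast
  have g: "goodpat T K" "p \<in> K" using MII_member[OF c K(1)] by auto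
  have v: "dpclass (K,p,p) \<in> MII T" using g by (simp add: MII_iff)
  have pK: "placed K p c e" using K unfolding placed_def by blast
  show ?thesis using requiv_intro[OF T c c v _ K(2) pK pK] by simp
qed

lemma rcls_mem: "x \<in> rcls T A \<omega> c \<longleftrightarrow> (\<exists>d. x = (\<omega>,d) \<and> d \<in> A \<and> occ (Lu T d) \<omega> \<and> requiv T \<omega> c d)"
  unfolding rcls_def by blast

lemma rcls_refl:
  assumes T: "tiles_nice T" and A: "A \<subseteq> MII T" and c: "c \<in> A" and pc: "placed S p c e"
  shows "(ptclass (S,p), c) \<in> rcls T A (ptclass (S,p)) c"
proof -
  have cM: "c \<in> MII T" using A c by blast
  have "occ (Lu T c) (ptclass (S,p))" using occ_Lu_iff[OF T cM] pc by blast
  then show ?thesis unfolding rcls_mem using requiv_refl[OF T cM pc] c by blast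
qed

lemma rcls_char:
  assumes T: "is_tiling T" and A: "A \<subseteq> MII T" and fr: "frame T v S x0 V" and vM: "\<And>n. v n \<in> MII T"
    and c: "c \<in> MII T" and pc: "placed S x0 c e"
  shows "rcls T A (ptclass (S,x0)) c = {(ptclass (S,x0), d) | d. d \<in> A \<and> placed S x0 d e}"
proof -
  have Tn: "tiles_nice T" using tilingD[OF T] by blast
  let ?\<omega> = "ptclass (S,x0)"
  show ?thesis
  proof (rule set_eqI)
    fix x
    show "x \<in> rcls T A ?\<omega> c \<longleftrightarrow> x \<in> {(?\<omega>, d) | d. d \<in> A \<and> placed S x0 d e}"
    proof
      assume "x \<in> rcls T A ?\<omega> c"
      then obtain d where d: "x = (?\<omega>,d)" "d \<in> A" "occ (Lu T d) ?\<omega>" "requiv T ?\<omega> c d"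
        unfolding rcls_mem by blast
      have dM: "d \<in> MII T" using A d by blast
      obtain e' where e': "placed S x0 d e'" using occ_Lu_iff[OF Tn dM] d by blast
      have "e = e'" using requiv_end[OF Tn c dM pc e' d(4)] .
      then show "x \<in> {(?\<omega>, d) | d. d \<in> A \<and> placed S x0 d e}" using d e' by blast
    next
      assume "x \<in> {(?\<omega>, d) | d. d \<in> A \<and> placed S x0 d e}"
      then obtain d where d: "x = (?\<omega>,d)" "d \<in> A" "placed S x0 d e" by blast
      have dM: "d \<in> MII T" using A d by blast
      obtain Kc where Kc: "(Kc,x0,e) \<in> c" "Kc \<subseteq> S" using pc placed_def by blast
      obtain Kd where Kd: "(Kd,x0,e) \<in> d" "Kd \<subseteq> S" using d(3) placed_def by blast
      have fin: "finite (Kc \<union> Kd)" using MII_member[OF c Kc(1)] MII_member[OF dM Kd(1)]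
        unfolding goodpat_def by blast
      obtain n where n: "Kc \<union> Kd \<subseteq> V n"
        using eventually_happens'[OF sequentially_bot frameD(9)[OF fr fin]] Kc Kd by blast
      have "placed (V n) x0 c e" "placed (V n) x0 d e" using Kc Kd n unfolding placed_def by blast+
      then have "requiv T ?\<omega> c d"
        using requiv_intro[OF Tn c dM vM frameD(4)[OF fr] frameD(5)[OF fr]] by blast
      moreover have "occ (Lu T d) ?\<omega>" using occ_Lu_iff[OF Tn dM] d by blast
      ultimately show "x \<in> rcls T A ?\<omega> c" unfolding rcls_mem using d by blast
    qed
  qed
qed

lemma placed_prod:
  assumes T: "tiles_nice T" and c: "c \<in> MII T" and d: "d \<in> MII T" and comp: "composable T c d"
    and pc: "placed S p c e" and pd: "placed S e d e'"
  shows "placed S p (dmult T c d) e'"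
proof -
  obtain Kc where Kc: "(Kc,p,e) \<in> c" "Kc \<subseteq> S" using pc placed_def by blast
  obtain Kd where Kd: "(Kd,e,e') \<in> d" "Kd \<subseteq> S" using pd placed_def by blast
  have cK: "c = dpclass (Kc,p,e)" using MII_member[OF c Kc(1)] by blast
  have dK: "d = dpclass (Kd,e,e')" using MII_member[OF d Kd(1)] by blast
  have "dmult T c d = dpclass (Kc \<union> Kd, p, e')"
    using dmult_eq[OF T c[unfolded cK] d[unfolded dK], of 0] comp cK dK by simp
  moreover have "(Kc \<union> Kd, p, e') \<in> dpclass (Kc \<union> Kd, p, e')" by simp
  moreover have "Kc \<union> Kd \<subseteq> S" using Kc Kd by blast
  ultimately show ?thesis unfolding placed_def by metis
qed

lemma placed_prod_inv:
  assumes T: "tiles_nice T" and c: "c \<in> MII T" and d: "d \<in> MII T" and comp: "composable T c d"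
    and pcd: "placed S p (dmult T c d) X" and pc: "placed S p c e"
  shows "placed S e d X"
proof -
  obtain Kc where Kc: "(Kc,p,e) \<in> c" "Kc \<subseteq> S" using pc placed_def by blast
  have cK: "c = dpclass (Kc,p,e)" using MII_member[OF c Kc(1)] by blast
  obtain D y z where dD: "d = dpclass (D,y,z)" using MII_obtain[OF d] by blast
  obtain b al where b: "tile_tr b y = e" "pat_tr al (Kc \<union> pat_tr b D) \<subseteq> T"
    using composable_iff[OF T c[unfolded cK] d[unfolded dD]] comp cK dD by blast
  have m: "dmult T c d = dpclass (Kc \<union> pat_tr b D, p, tile_tr b z)"
    using dmult_eq[OF T c[unfolded cK] d[unfolded dD] _ b(1)] comp cK dD by simp
  obtain K where K: "(K,p,X) \<in> dmult T c d" "K \<subseteq> S" using pcd placed_def by blast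
  then obtain a where a: "K = pat_tr a (Kc \<union> pat_tr b D)" "p = tile_tr a p" "X = tile_tr a (tile_tr b z)"
    using m mem_dpclass by blast
  have "nice p" using MII_member[OF c Kc(1)] goodpat_nice[OF T] by blast
  then have "a = 0" using a(2) tile_tr_fix by metis
  then have "pat_tr b D \<subseteq> S" "X = tile_tr b z" using a K(2) by (auto simp: pat_tr_Un)
  moreover have "(pat_tr b D, e, tile_tr b z) \<in> d" unfolding dD mem_dpclass using b(1) by blast
  ultimately show ?thesis unfolding placed_def by blast
qed

lemma rmult_eq:
  assumes T: "is_tiling T" and A: "A \<subseteq> MII T" and Acl: "\<forall>c\<in>A. \<forall>c'\<in>A. composable T c c' \<longrightarrow> dmult T c c' \<in> A"
    and B: "\<forall>\<omega>\<in>B. is_ptclass \<omega>"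
    and fr: "frame T v S x0 V" and vM: "\<And>n. v n \<in> MII T"
    and w1: "(ptclass (S,x0), c) \<in> Rdom T A B" and w2: "(act (ptclass (S,x0)) c, c') \<in> Rdom T A B"
    and comp: "composable T c c'"
  shows "rmult T A B (rcls T A (ptclass (S,x0)) c) (rcls T A (act (ptclass (S,x0)) c) c') =
           rcls T A (ptclass (S,x0)) (dmult T c c')"
proof -
  have Tn: "tiles_nice T" using tilingD[OF T] by blast
  let ?\<omega> = "ptclass (S,x0)"
  let ?g = "rcls T A ?\<omega> c" and ?h = "rcls T A (act ?\<omega> c) c'"
  have cA: "c \<in> A" "c' \<in> A" using w1 w2 unfolding Rdom_def by auto
  have cM: "c \<in> MII T" "c' \<in> MII T" using cA A by blast+
  obtain e where e: "placed S x0 c e" using w1 occ_Lu_iff[OF Tn cM(1)] unfolding Rdom_def by blast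
  have act: "act ?\<omega> c = ptclass (S,e)" using act_eq[OF Tn cM(1) e] .
  obtain e' where e': "placed S e c' e'" using w2 occ_Lu_iff[OF Tn cM(2)] act unfolding Rdom_def by auto
  have pcc: "placed S x0 (dmult T c c') e'" using placed_prod[OF Tn cM comp e e'] .
  have ccM: "dmult T c c' \<in> MII T" using dmult_MII[OF Tn cM comp] .
  show ?thesis unfolding rmult_def
  proof (rule the_equality)
    show "\<exists>\<omega> c2 c2'. (\<omega>,c2) \<in> Rdom T A B \<and> (act \<omega> c2, c2') \<in> Rdom T A B \<and> composable T c2 c2' \<and>
       ?g = rcls T A \<omega> c2 \<and> ?h = rcls T A (act \<omega> c2) c2' \<and> rcls T A ?\<omega> (dmult T c c') = rcls T A \<omega> (dmult T c2 c2')"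
      using w1 w2 comp by blast
  next
    fix k assume "\<exists>\<omega> c2 c2'. (\<omega>,c2) \<in> Rdom T A B \<and> (act \<omega> c2, c2') \<in> Rdom T A B \<and> composable T c2 c2' \<and>
       ?g = rcls T A \<omega> c2 \<and> ?h = rcls T A (act \<omega> c2) c2' \<and> k = rcls T A \<omega> (dmult T c2 c2')"
    then obtain \<omega>2 c2 c2' where h: "(\<omega>2,c2) \<in> Rdom T A B" "(act \<omega>2 c2, c2') \<in> Rdom T A B" "composable T c2 c2'"
      "?g = rcls T A \<omega>2 c2" "?h = rcls T A (act \<omega>2 c2) c2'" "k = rcls T A \<omega>2 (dmult T c2 c2')" by blast
    have c2A: "c2 \<in> A" "c2' \<in> A" using h(1,2) unfolding Rdom_def by auto
    have c2M: "c2 \<in> MII T" "c2' \<in> MII T" using c2A A by blast+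
    have "\<omega>2 \<in> B" using h(1) unfolding Rdom_def by auto
    then obtain S2 p2 where S2: "\<omega>2 = ptclass (S2,p2)" using B is_ptclass_def by blast
    obtain e2 where e2: "placed S2 p2 c2 e2" using h(1) occ_Lu_iff[OF Tn c2M(1)] S2 unfolding Rdom_def by auto
    have "(\<omega>2, c2) \<in> rcls T A \<omega>2 c2" using rcls_refl[OF Tn A c2A(1) e2] S2 by simp
    then have "(\<omega>2, c2) \<in> ?g" using h(4) by simp
    then have q: "\<omega>2 = ?\<omega>" "occ (Lu T c2) ?\<omega>" "requiv T ?\<omega> c c2" unfolding rcls_mem by auto
    obtain e3 where e3: "placed S x0 c2 e3" using q(2) occ_Lu_iff[OF Tn c2M(1)] by blast
    have "e = e3" using requiv_end[OF Tn cM(1) c2M(1) e e3 q(3)] .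
    then have act2: "act \<omega>2 c2 = ptclass (S,e)" using act_eq[OF Tn c2M(1) e3] q(1) by simp
    obtain e4 where e4: "placed S e c2' e4" using h(2) occ_Lu_iff[OF Tn c2M(2)] act2 unfolding Rdom_def by auto
    have "(ptclass (S,e), c2') \<in> rcls T A (ptclass (S,e)) c2'" using rcls_refl[OF Tn A c2A(2) e4] .
    then have "(ptclass (S,e), c2') \<in> ?h" using h(5) act2 by simp
    then have "requiv T (ptclass (S,e)) c' c2'" using act unfolding rcls_mem by auto
    then have "e' = e4" using requiv_end[OF Tn cM(2) c2M(2) e' e4] by blast
    then have pcc2: "placed S x0 (dmult T c2 c2') e'" using placed_prod[OF Tn c2M h(3) e3] e4 \<open>e = e3\<close> by simp
    have cc2M: "dmult T c2 c2' \<in> MII T" using dmult_MII[OF Tn c2M h(3)] .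
    show "k = rcls T A ?\<omega> (dmult T c c')"
      using h(6) q(1) rcls_char[OF T A fr vM cc2M pcc2] rcls_char[OF T A fr vM ccM pcc] by simp
  qed
qed

lemma hdist_small:
  assumes "hdist \<omega>1 \<omega>2 < ereal (exp (- R))"
  shows "\<exists>r. r > R \<and> 0 \<le> r \<and> Mr r \<omega>1 = Mr r \<omega>2"
proof -
  define A where "A = {r. 0 \<le> r \<and> Mr r \<omega>1 = Mr r \<omega>2}"
  have hd: "hdist \<omega>1 \<omega>2 = (if A = {} then \<infinity> else if bdd_above A then ereal (exp (- Sup A)) else 0)"
    unfolding hdist_def A_def Let_def by simp
  have ne: "A \<noteq> {}" using assms hd by (cases "A = {}") auto
  show ?thesis
  proof (cases "bdd_above A")
    case True
    then have "exp (- Sup A) < exp (- R)" using assms hd ne by simp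
    then have "R < Sup A" by simp
    then obtain r where "r \<in> A" "R < r" using less_cSup_iff[OF ne True] by blast
    then show ?thesis unfolding A_def by blast
  next
    case False
    then obtain r where "r \<in> A" "R < r" unfolding bdd_above_def by (meson not_le)
    then show ?thesis unfolding A_def by blast
  qed
qed

lemma UU_open:
  assumes T: "is_tiling T" and w: "w \<in> MII T"
  shows "Omega_open T (UU T w)"
  unfolding Omega_open_def
proof (intro conjI ballI)
  show "UU T w \<subseteq> Omega T" unfolding UU_def by blast
next
  fix \<omega>1 assume "\<omega>1 \<in> UU T w"
  then have o1: "\<omega>1 \<in> Omega T" "occ w \<omega>1" unfolding UU_def by auto
  obtain S1 p1 where S1: "is_tiling S1" "p1 \<in> S1" "\<omega>1 = ptclass (S1,p1)" using Omega_ptclass[OF o1(1)] by blast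
  have tl1: "tlk S1" using tiling_tl[OF S1(1)] .
  obtain Kw where Kw: "(Kw,p1,p1) \<in> w" "Kw \<subseteq> S1" using o1(2) occ_iff[OF w] S1(3) placed_def by metis
  have tpK: "\<forall>t\<in>Kw. tprops t" using tlkD(2)[OF tl1] Kw(2) by blast
  have finK: "finite Kw" using MII_member[OF w Kw(1)] goodpat_def by blast
  have "bounded (\<Union>(fst ` Kw))" using finK tpK unfolding tprops_def by (intro bounded_Union) auto
  obtain q where q: "q \<in> fst p1" using tpK MII_member[OF w Kw(1)] unfolding tprops_def by blast
  obtain R where R: "\<forall>z\<in>\<Union>(fst ` Kw). dist q z \<le> R"
    using \<open>bounded (\<Union>(fst ` Kw))\<close> bounded_any_center by metis
  show "\<exists>\<epsilon>>0. \<forall>\<omega>'\<in>Omega T. hdist \<omega>1 \<omega>' < ereal \<epsilon> \<longrightarrow> \<omega>' \<in> UU T w"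
  proof (intro exI[of _ "exp (- R)"] conjI ballI impI)
    show "exp (- R) > 0" by simp
    fix \<omega>2 assume o2: "\<omega>2 \<in> Omega T" "hdist \<omega>1 \<omega>2 < ereal (exp (- R))"
    obtain r where r: "r > R" "0 \<le> r" "Mr r \<omega>1 = Mr r \<omega>2" using hdist_small[OF o2(2)] by blast
    obtain S2 p2 where S2: "is_tiling S2" "p2 \<in> S2" "\<omega>2 = ptclass (S2,p2)" using Omega_ptclass[OF o2(1)] by blast
    have tl2: "tlk S2" using tiling_tl[OF S2(1)] .
    have "ptclass (P0 r S1 p1, p1) = ptclass (P0 r S2 p2, p2)"
      using r(3) Mr_eq[OF tl1 S1(2)] Mr_eq[OF tl2 S2(2)] S1(3) S2(3) by simp
    then obtain a where a: "P0 r S2 p2 = pat_tr a (P0 r S1 p1)" "p2 = tile_tr a p1"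
      using ptclass_eq_iff mem_ptclass by metis
    have KP: "Kw \<subseteq> P0 r S1 p1"
    proof
      fix t assume t: "t \<in> Kw"
      obtain z where z: "z \<in> interior (fst t)" using tprops_interior tpK t by blast
      have "z \<in> fst t" using z interior_subset by blast
      then have "dist q z \<le> R" using R t by blast
      then have "z \<in> ball q r" using r(1) by simp
      then have "interior (fst t) \<inter> (\<Union>q\<in>fst p1. ball q r) \<noteq> {}" using z q by blast
      then show "t \<in> P0 r S1 p1" unfolding P0_def using t Kw(2) by blast
    qed
    have "P0 r S2 p2 \<subseteq> S2" using S2(2) unfolding P0_def by blast
    then have "pat_tr a Kw \<subseteq> S2" using KP a(1) pat_tr_mono[OF KP, of a] by blast
    moreover have "(pat_tr a Kw, p2, p2) \<in> w" using MII_tr_closed[OF w Kw(1)] a(2) by blast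
    ultimately have "occ w \<omega>2" using occ_iff[OF w] S2(3) unfolding placed_def by blast
    then show "\<omega>2 \<in> UU T w" using o2(1) unfolding UU_def by blast
  qed
qed


lemma placed_endpoint_in: "c \<in> MII T \<Longrightarrow> placed S p c e \<Longrightarrow> e \<in> S \<and> p \<in> S"
  unfolding placed_def using MII_member by blast

lemma comp_frame:
  assumes T: "is_tiling T" and fr: "frame T v S x0 V" and vM: "\<And>n. v n \<in> MII T"
    and c: "c \<in> MII T" and d: "d \<in> MII T" and pc: "placed S p c e" and pd: "placed S e d e'"
  shows "composable T c d"
proof -
  have Tn: "tiles_nice T" using tilingD[OF T] by blast
  obtain Kc where Kc: "(Kc,p,e) \<in> c" "Kc \<subseteq> S" using pc placed_def by blast
  obtain Kd where Kd: "(Kd,e,e') \<in> d" "Kd \<subseteq> S" using pd placed_def by blast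
  have cK: "c = dpclass (Kc,p,e)" using MII_member[OF c Kc(1)] by blast
  have dK: "d = dpclass (Kd,e,e')" using MII_member[OF d Kd(1)] by blast
  have fin: "finite (Kc \<union> Kd)" using MII_member[OF c Kc(1)] MII_member[OF d Kd(1)]
    unfolding goodpat_def by blast
  obtain n where n: "Kc \<union> Kd \<subseteq> V n"
    using eventually_happens'[OF sequentially_bot frameD(9)[OF fr fin]] Kc Kd by blast
  have "goodpat T (V n)" using MII_member[OF vM frameD(4)[OF fr]] by blast
  then obtain a where "pat_tr a (V n) \<subseteq> T" unfolding goodpat_def by blast
  then have "pat_tr a (Kc \<union> Kd) \<subseteq> T" using pat_tr_mono[OF n, of a] by blast
  then have "pat_tr a (Kc \<union> pat_tr 0 Kd) \<subseteq> T" by simp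
  then show ?thesis
    using composable_iff[OF Tn c[unfolded cK] d[unfolded dK]] cK dK by (metis tile_tr_0)
qed

locale MT =
  fixes T :: "('n::finite,'l) tile set" and T' :: "('m::finite,'k) tile set"
    and N :: "('n,'l) dpat set set" and ph :: "('n,'l) dpat set \<Rightarrow> ('m,'k) dpat set"
  assumes T: "is_tiling T" and T': "is_tiling T'"
    and sag: "sub_almost_groupoid T N" and appr: "approximating T N"
    and phM: "\<forall>c\<in>N. ph c \<in> MII T'"
    and phcomp: "\<forall>c\<in>N. \<forall>c'\<in>N. composable T c c' \<longrightarrow> composable T' (ph c) (ph c')"
    and phinv: "\<forall>c\<in>N. ph (dinv c) = dinv (ph c)"
    and phmult: "\<forall>c\<in>N. \<forall>c'\<in>N. composable T c c' \<longrightarrow>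
           dle (dmult T' (ph c) (ph c')) (ph (dmult T c c'))"
    and phrad: "\<exists>t>0. \<exists>B. \<forall>u\<in>N. is_unit T u \<longrightarrow> \<bar>rad (ph u) - t * rad u\<bar> \<le> B"
begin

lemma Tn: "tiles_nice T" using tilingD[OF T] by blast
lemma T'n: "tiles_nice T'" using tilingD[OF T'] by blast
lemma NM: "c \<in> N \<Longrightarrow> c \<in> MII T" using sag unfolding sub_almost_groupoid_def by blast
lemma Ninv: "c \<in> N \<Longrightarrow> dinv c \<in> N" using sag unfolding sub_almost_groupoid_def by blast
lemma Nmult: "c \<in> N \<Longrightarrow> c' \<in> N \<Longrightarrow> composable T c c' \<Longrightarrow> dmult T c c' \<in> N"
  using sag unfolding sub_almost_groupoid_def by blast
lemma phM': "c \<in> N \<Longrightarrow> ph c \<in> MII T'" using phM by blast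

lemma ph_unit:
  assumes u: "u \<in> N" "is_unit T u"
  shows "is_unit T' (ph u)"
proof -
  have "ph u = dinv (ph u)" using phinv u dinv_unit[OF u(2)] by metis
  obtain M x y where M: "ph u = dpclass (M,x,y)" "goodpat T' M" "x \<in> M" "y \<in> M"
    using MII_obtain[OF phM'[OF u(1)]] by blast
  have "dpclass (M,y,x) = dpclass (M,x,y)" using \<open>ph u = dinv (ph u)\<close> M(1) by simp
  then obtain a where a: "M = pat_tr a M" "y = tile_tr a x" "x = tile_tr a y"
    using dpclass_eq_iff mem_dpclass by metis
  have "nice x" using goodpat_nice[OF T'n M(2,3)] .
  moreover have "tile_tr (a + a) x = x" using a(2,3) tile_tr_add[of a a x] by metis
  ultimately have aa: "a + a = 0" using tile_tr_fix by blast
  have "a $ i = 0" for i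
  proof -
    have "(a + a) $ i = 0" using aa by simp
    then show ?thesis by simp
  qed
  then have "a = 0" by (simp add: vec_eq_iff)
  then have "y = x" using a by simp
  then show ?thesis using M phM'[OF u(1)] unit_iff by metis
qed

lemma ph_approx:
  assumes u: "approx_seq T N u"
  shows "approx_seq T' (MII T') (ph \<circ> u)"
proof -
  note uD = approx_seqD[OF u]
  have i1: "\<And>n. (ph \<circ> u) n \<in> MII T'" using phM' uD(1) by simp
  have i2: "\<And>n. is_unit T' ((ph \<circ> u) n)" using ph_unit uD(1,2) by simp
  have iN: "iprod T u k \<in> N" for k
    by (induction k) (use uD(1,3) Nmult in auto)
  have ind: "iprod T' (ph \<circ> u) k \<in> MII T' \<and> dle (iprod T' (ph \<circ> u) k) (ph (iprod T u k))" for k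
  proof (induction k)
    case 0
    then show ?case using i1[of 0] dle_refl[OF i1[of 0]] by simp
  next
    case (Suc k)
    note IH1 = conjunct1[OF Suc.IH] and IH2 = conjunct2[OF Suc.IH]
    have cT: "composable T (iprod T u k) (u (Suc k))" using uD(3) .
    have c1: "composable T' (ph (iprod T u k)) (ph (u (Suc k)))" using phcomp iN uD(1) cT by blast
    have m: "ph (iprod T u k) \<in> MII T'" "ph (u (Suc k)) \<in> MII T'" using phM' iN uD(1) by auto
    have mono: "composable T' (iprod T' (ph \<circ> u) k) (ph (u (Suc k))) \<and>
       dle (dmult T' (iprod T' (ph \<circ> u) k) (ph (u (Suc k)))) (dmult T' (ph (iprod T u k)) (ph (u (Suc k))))"
      using dle_comp_mono[OF T'n IH1 m(1) m(2) IH2 c1] by blast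
    have d2: "dle (dmult T' (ph (iprod T u k)) (ph (u (Suc k)))) (ph (iprod T u (Suc k)))"
      using phmult iN uD(1) cT by simp
    have e1: "iprod T' (ph \<circ> u) (Suc k) = dmult T' (iprod T' (ph \<circ> u) k) (ph (u (Suc k)))"
      by (simp only: iprod.simps comp_apply)
    have M1: "iprod T' (ph \<circ> u) (Suc k) \<in> MII T'" unfolding e1 using dmult_MII[OF T'n IH1 m(2) conjunct1[OF mono]] .
    have M2: "dmult T' (ph (iprod T u k)) (ph (u (Suc k))) \<in> MII T'" using dmult_MII[OF T'n m c1] .
    have M3: "ph (iprod T u (Suc k)) \<in> MII T'" using phM' iN by blast
    have "dle (iprod T' (ph \<circ> u) (Suc k)) (ph (iprod T u (Suc k)))"
      using dle_trans[OF M1 M2 M3] conjunct2[OF mono] d2 unfolding e1 by blast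
    then show ?case using M1 by blast
  qed
  have i3: "composable T' (iprod T' (ph \<circ> u) k) ((ph \<circ> u) (Suc k))" for k
  proof -
    have cT: "composable T (iprod T u k) (u (Suc k))" using uD(3) .
    have c1: "composable T' (ph (iprod T u k)) (ph (u (Suc k)))" using phcomp iN uD(1) cT by blast
    have m: "ph (iprod T u k) \<in> MII T'" "ph (u (Suc k)) \<in> MII T'" using phM' iN uD(1) by auto
    have "composable T' (iprod T' (ph \<circ> u) k) (ph (u (Suc k)))"
      using dle_comp_mono[OF T'n conjunct1[OF ind] m(1) m(2) conjunct2[OF ind] c1] by blast
    then show ?thesis by simp
  qed
  obtain t B where tB: "t > 0" "\<forall>u\<in>N. is_unit T u \<longrightarrow> \<bar>rad (ph u) - t * rad u\<bar> \<le> B" using phrad by blast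
  have i4: "filterlim (\<lambda>n. rad ((ph \<circ> u) n)) at_top sequentially"
    unfolding filterlim_at_top
  proof
    fix Z
    have "\<forall>\<^sub>F n in sequentially. (Z + B) / t \<le> rad (u n)" using uD(4)[unfolded filterlim_at_top] by blast
    then show "\<forall>\<^sub>F n in sequentially. Z \<le> rad ((ph \<circ> u) n)"
    proof (rule eventually_mono)
      fix n assume h: "(Z + B) / t \<le> rad (u n)"
      have "\<bar>rad (ph (u n)) - t * rad (u n)\<bar> \<le> B" using tB uD(1,2) by blast
      moreover have "Z + B \<le> t * rad (u n)" using h tB(1) by (simp add: field_simps)
      ultimately show "Z \<le> rad ((ph \<circ> u) n)" by simp
    qed
  qed
  show ?thesis unfolding approx_seq_def using i1 i2 i3 i4 by blast
qed

lemma ALG: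
  assumes w: "w \<in> N" and c: "c \<in> N" and Kw: "(Kw,p,p) \<in> w" and Kc: "(Kc,p,e) \<in> c" "Kc \<subseteq> Kw"
    and Pw: "(Pw,p',p') \<in> ph w"
  shows "dmult T w c \<in> N \<and> dmult T w c = dpclass (Kw,p,e) \<and>
    (\<exists>Pf E. (Pf,p',E) \<in> ph (dmult T w c) \<and> Pf \<subseteq> Pw \<and> placed Pf p' (ph c) E)"
proof -
  have wM: "w \<in> MII T" and cM: "c \<in> MII T" using NM w c by auto
  have wK: "w = dpclass (Kw,p,p)" using MII_member[OF wM Kw] by blast
  have cK: "c = dpclass (Kc,p,e)" using MII_member[OF cM Kc(1)] by blast
  obtain al where al: "pat_tr al Kw \<subseteq> T" using MII_member[OF wM Kw] goodpat_def by blast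
  have un: "Kw \<union> pat_tr 0 Kc = Kw" using Kc(2) by auto
  have comp1: "composable T w c"
    using composable_iff[OF Tn wM[unfolded wK] cM[unfolded cK]] wK cK al un by (metis tile_tr_0)
  have f: "dmult T w c = dpclass (Kw,p,e)"
    using dmult_eq[OF Tn wM[unfolded wK] cM[unfolded cK] _ , of 0] comp1 wK cK un by simp
  have fN: "dmult T w c \<in> N" using Nmult[OF w c comp1] .
  define f where "f = dmult T w c"
  have fM: "f \<in> MII T" using NM fN f_def by simp
  have fK: "f = dpclass (Kw,p,e)" using f f_def by simp
  have dc: "dinv c = dpclass (Kc,e,p)" using cK by simp
  have dcN: "dinv c \<in> N" using Ninv[OF c] .
  have dcM: "dinv c \<in> MII T" using NM dcN by blast
  have comp2: "composable T f (dinv c)"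
    using composable_iff[OF Tn fM[unfolded fK] dcM[unfolded dc]] fK dc al un by (metis tile_tr_0)
  have m2: "dmult T f (dinv c) = w"
    using dmult_eq[OF Tn fM[unfolded fK] dcM[unfolded dc] _, of 0] comp2 fK dc un wK by simp
  have d1: "dle (dmult T' (ph f) (dinv (ph c))) (ph w)"
    using phmult fN dcN comp2 m2 phinv c f_def by metis
  have comp3: "composable T' (ph f) (dinv (ph c))" using phcomp fN dcN comp2 phinv c f_def by metis
  have phfM: "ph f \<in> MII T'" using phM' fN f_def by simp
  have phcM: "ph c \<in> MII T'" using phM' c by blast
  obtain F s ef where F: "ph f = dpclass (F,s,ef)" using MII_obtain[OF phfM] by blast
  obtain C sc ec where C: "ph c = dpclass (C,sc,ec)" using MII_obtain[OF phcM] by blast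
  have dphc: "dinv (ph c) = dpclass (C,ec,sc)" using C by simp
  have dphcM: "dinv (ph c) \<in> MII T'" using dinv_MII[OF phcM] .
  from iffD1[OF composable_iff[OF T'n phfM[unfolded F] dphcM[unfolded dphc]] comp3[unfolded F dphc]]
  obtain b where b: "tile_tr b ec = ef" by blast
  have m3: "dmult T' (ph f) (dinv (ph c)) = dpclass (F \<union> pat_tr b C, s, tile_tr b sc)"
    using dmult_eq[OF T'n phfM[unfolded F] dphcM[unfolded dphc] _ b] comp3 F dphc by simp
  have phwK: "ph w = dpclass (Pw,p',p')" using MII_member[OF phM'[OF w] Pw] by blast
  obtain a where a: "pat_tr a (F \<union> pat_tr b C) \<subseteq> Pw" "tile_tr a s = p'"
    using d1 m3 phwK dle_iff by metis
  define Pf where "Pf = pat_tr a F"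
  define E where "E = tile_tr a ef"
  have PfE: "(Pf,p',E) \<in> ph f" unfolding Pf_def E_def F mem_dpclass using a(2) by blast
  have PfW: "Pf \<subseteq> Pw" using a(1) unfolding Pf_def by (auto simp: pat_tr_Un)
  have comp4: "composable T' (ph w) (ph c)" using phcomp w c comp1 by blast
  have phwM: "ph w \<in> MII T'" using phM' w by blast
  from iffD1[OF composable_iff[OF T'n phwM[unfolded phwK] phcM[unfolded C]] comp4[unfolded phwK C]]
  obtain b' where b': "tile_tr b' sc = p'" by blast
  have m4: "dmult T' (ph w) (ph c) = dpclass (Pw \<union> pat_tr b' C, p', tile_tr b' ec)"
    using dmult_eq[OF T'n phwM[unfolded phwK] phcM[unfolded C] _ b'] comp4 phwK C by simp
  have d2: "dle (dmult T' (ph w) (ph c)) (ph f)" using phmult w c comp1 f_def by blast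
  have phfK: "ph f = dpclass (Pf,p',E)" using MII_member[OF phfM PfE] by blast
  obtain a' where a': "pat_tr a' (Pw \<union> pat_tr b' C) \<subseteq> Pf" "tile_tr a' p' = p'" "tile_tr a' (tile_tr b' ec) = E"
    using d2 m4 phfK dle_iff by metis
  have "nice p'" using MII_member[OF phwM Pw] goodpat_nice[OF T'n] by blast
  then have "a' = 0" using a'(2) tile_tr_fix by blast
  then have sub: "pat_tr b' C \<subseteq> Pf" "tile_tr b' ec = E" using a' by (auto simp: pat_tr_Un)
  have "(pat_tr b' C, p', tile_tr b' ec) \<in> ph c" unfolding C mem_dpclass using b' by blast
  then have "placed Pf p' (ph c) E" unfolding placed_def using sub by metis
  then show ?thesis using fN f PfE PfW f_def by blast
qed

lemma core:
  assumes u: "approx_seq T N u" and fr: "frame T u S x0 V" and fr': "frame T' (ph \<circ> u) S' x0' W"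
    and c: "c \<in> N" "c2 \<in> N" and pc: "placed S x0 c e" "placed S x0 c2 e"
  shows "\<exists>E. placed S' x0' (ph c) E \<and> placed S' x0' (ph c2) E"
proof -
  note uD = approx_seqD[OF u]
  obtain Kc where Kc: "(Kc,x0,e) \<in> c" "Kc \<subseteq> S" using pc(1) placed_def by blast
  obtain Kc2 where Kc2: "(Kc2,x0,e) \<in> c2" "Kc2 \<subseteq> S" using pc(2) placed_def by blast
  have fin: "finite (Kc \<union> Kc2)" using MII_member[OF NM[OF c(1)] Kc(1)] MII_member[OF NM[OF c(2)] Kc2(1)]
    unfolding goodpat_def by blast
  obtain n where n: "Kc \<union> Kc2 \<subseteq> V n"
    using eventually_happens'[OF sequentially_bot frameD(9)[OF fr fin]] Kc Kc2 by blast
  have Vn: "(V n, x0, x0) \<in> u n" using frameD(4)[OF fr] .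
  have Wn: "(W n, x0', x0') \<in> ph (u n)" using frameD(4)[OF fr'] by simp
  obtain Pf E where A1: "dmult T (u n) c = dpclass (V n, x0, e)" "(Pf,x0',E) \<in> ph (dmult T (u n) c)"
    "Pf \<subseteq> W n" "placed Pf x0' (ph c) E"
    using ALG[OF uD(1) c(1) Vn Kc(1) _ Wn] n by blast
  obtain Pf2 E2 where A2: "dmult T (u n) c2 = dpclass (V n, x0, e)" "(Pf2,x0',E2) \<in> ph (dmult T (u n) c2)"
    "Pf2 \<subseteq> W n" "placed Pf2 x0' (ph c2) E2"
    using ALG[OF uD(1) c(2) Vn Kc2(1) _ Wn] n by blast
  have ff: "dmult T (u n) c2 = dmult T (u n) c" using A1(1) A2(1) by simp
  have fN: "dmult T (u n) c \<in> N" using ALG[OF uD(1) c(1) Vn Kc(1) _ Wn] n by blast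
  have WS: "W n \<subseteq> S'" using frameD(5)[OF fr'] .
  have "placed S' x0' (ph (dmult T (u n) c)) E" using A1(2,3) WS unfolding placed_def by blast
  moreover have "placed S' x0' (ph (dmult T (u n) c)) E2" using A2(2,3) WS ff unfolding placed_def by auto
  ultimately have "E2 = E" using placed_unique[OF T'n phM'[OF fN]] by blast
  then show ?thesis using A1(3,4) A2(3,4) WS placed_mono by (metis subset_trans)
qed

lemma core1:
  assumes u: "approx_seq T N u" and fr: "frame T u S x0 V" and fr': "frame T' (ph \<circ> u) S' x0' W"
    and c: "c \<in> N" and pc: "placed S x0 c e"
  shows "\<exists>E. placed S' x0' (ph c) E"
  using core[OF u fr fr' c c pc pc] by blast

lemma ph_unit_end:
  assumes "u \<in> N" "is_unit T u" "placed S p (ph u) E"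
  shows "E = p"
  using assms ph_unit unit_rep unfolding placed_def by metis

lemma slim_indep:
  assumes u: "approx_seq T N u" and w: "approx_seq T N w" and eq: "slim u = slim w"
  shows "slim (ph \<circ> u) = slim (ph \<circ> w)"
proof -
  have uM: "approx_seq T (MII T) u" "approx_seq T (MII T) w" using u w approx_mono NM by blast+
  obtain S x0 V where fr: "frame T u S x0 V" using frame_exists[OF T uM(1)] by blast
  obtain S2 x2 V2 where frw: "frame T w S2 x2 V2" using frame_exists[OF T uM(2)] by blast
  obtain S' x0' W where fr': "frame T' (ph \<circ> u) S' x0' W" using frame_exists[OF T' ph_approx[OF u]] by blast
  obtain S2' x2' W2 where frw': "frame T' (ph \<circ> w) S2' x2' W2" using frame_exists[OF T' ph_approx[OF w]] by blast
  have "ptclass (S2,x2) = ptclass (S,x0)" using eq frameD(6)[OF fr] frameD(6)[OF frw] by simp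
  then obtain a where a: "S2 = pat_tr a S" "x2 = tile_tr a x0" using ptclass_eq_iff mem_ptclass by metis
  note wD = approx_seqD[OF w]
  have "occ (ph (w n)) (ptclass (S',x0'))" for n
  proof -
    have "placed S2 x2 (w n) x2" using frameD(4,5)[OF frw] unfolding placed_def by blast
    then have "placed S x0 (w n) x0" using placed_tr_iff[OF NM[OF wD(1)]] a by metis
    then obtain E where E: "placed S' x0' (ph (w n)) E" using core1[OF u fr fr' wD(1)] by blast
    then have "E = x0'" using ph_unit_end wD(1,2) by blast
    then show ?thesis using E occ_iff[OF phM'[OF wD(1)]] by simp
  qed
  moreover have "is_ptclass (ptclass (S',x0'))" using frameD(2,3)[OF fr'] is_ptclass_def by blast
  ultimately have "ptclass (S',x0') = ptclass (S2',x2')" using frameD(7)[OF frw'] by simp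
  then show ?thesis using frameD(6)[OF fr'] frameD(6)[OF frw'] by simp
qed

lemma act_lemma:
  assumes u: "approx_seq T N u" and fr: "frame T u S x0 V" and fr': "frame T' (ph \<circ> u) S' x0' W"
    and c: "c \<in> N" and pc: "placed S x0 c e" and pE: "placed S' x0' (ph c) E"
    and u2: "approx_seq T N u2" and s2: "slim u2 = ptclass (S,e)"
  shows "slim (ph \<circ> u2) = ptclass (S',E)"
proof -
  have u2M: "approx_seq T (MII T) u2" using u2 approx_mono NM by blast
  have uM: "approx_seq T (MII T) u" using u approx_mono NM by blast
  obtain S2 x2 V2 where fr2: "frame T u2 S2 x2 V2" using frame_exists[OF T u2M] by blast
  obtain S2' x2' W2 where fr2': "frame T' (ph \<circ> u2) S2' x2' W2" using frame_exists[OF T' ph_approx[OF u2]] by blast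
  have "ptclass (S2,x2) = ptclass (S,e)" using s2 frameD(6)[OF fr2] by simp
  then obtain a where a: "S2 = pat_tr a S" "x2 = tile_tr a e" using ptclass_eq_iff mem_ptclass by metis
  note u2D = approx_seqD[OF u2]
  note uD = approx_seqD[OF u]
  have cM: "c \<in> MII T" using NM c by blast
  have "occ (ph (u2 k)) (ptclass (S',E))" for k
  proof -
    have kN: "u2 k \<in> N" using u2D(1) .
    have kM: "u2 k \<in> MII T" using NM kN by blast
    have "placed S2 x2 (u2 k) x2" using frameD(4,5)[OF fr2] unfolding placed_def by blast
    then have pk: "placed S e (u2 k) e" using placed_tr_iff[OF kM] a by metis
    have comp: "composable T c (u2 k)"
      using comp_frame[OF T fr _ cM kM pc pk] NM uD(1) by blast
    have gN: "dmult T c (u2 k) \<in> N" using Nmult[OF c kN comp] .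
    have pg: "placed S x0 (dmult T c (u2 k)) e" using placed_prod[OF Tn cM kM comp pc pk] .
    obtain Eg where Eg: "placed S' x0' (ph (dmult T c (u2 k))) Eg" using core1[OF u fr fr' gN pg] by blast
    have d: "dle (dmult T' (ph c) (ph (u2 k))) (ph (dmult T c (u2 k)))" using phmult c kN comp by blast
    have comp': "composable T' (ph c) (ph (u2 k))" using phcomp c kN comp by blast
    have m: "dmult T' (ph c) (ph (u2 k)) \<in> MII T'" using dmult_MII[OF T'n phM'[OF c] phM'[OF kN] comp'] .
    have "placed S' x0' (dmult T' (ph c) (ph (u2 k))) Eg" using dle_placed2[OF m phM'[OF gN] d Eg] .
    then have "placed S' E (ph (u2 k)) Eg" using placed_prod_inv[OF T'n phM'[OF c] phM'[OF kN] comp' _ pE] by blast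
    moreover then have "Eg = E" using ph_unit_end kN u2D(2) by blast
    ultimately show ?thesis using occ_iff[OF phM'[OF kN]] by simp
  qed
  moreover have "is_ptclass (ptclass (S',E))"
    using frameD(2)[OF fr'] placed_endpoint_in[OF phM'[OF c] pE] is_ptclass_def by blast
  ultimately have "ptclass (S',E) = ptclass (S2',x2')" using frameD(7)[OF fr2'] by simp
  then show ?thesis using frameD(6)[OF fr2'] by simp
qed

end


context MT begin

lemma OmN_Omega: "OmegaN T N \<subseteq> Omega T"
  unfolding OmegaN_def UU_def by blast

lemma OmN_ptclass: "\<forall>\<omega>\<in>OmegaN T N. is_ptclass \<omega>"
  using OmN_Omega unfolding Omega_def by blast

lemma Omega'_ptclass: "\<forall>\<omega>\<in>Omega T'. is_ptclass \<omega>"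
  unfolding Omega_def by blast

lemma NsubM: "N \<subseteq> MII T" using NM by blast

lemma frames:
  assumes u: "approx_seq T N u"
  shows "\<exists>S x0 V S' x0' W. frame T u S x0 V \<and> frame T' (ph \<circ> u) S' x0' W"
proof -
  have uM: "approx_seq T (MII T) u" using u approx_mono NsubM by blast
  show ?thesis using frame_exists[OF T uM] frame_exists[OF T' ph_approx[OF u]] by blast
qed

lemma uM_all: "approx_seq T N u \<Longrightarrow> u n \<in> MII T"
  using approx_seqD(1) NM by blast

lemma phuM_all: assumes "approx_seq T N u" shows "(ph \<circ> u) n \<in> MII T'"
  using phM'[OF approx_seqD(1)[OF assms]] by simp

lemma wd:
  assumes u: "approx_seq T N u" and w: "approx_seq T N w" and c: "c \<in> N" and d: "d \<in> N"
    and oc: "occ (Lu T c) (slim u)" and od: "occ (Lu T d) (slim w)"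
    and eq: "rcls T N (slim u) c = rcls T N (slim w) d"
  shows "rcls T' (MII T') (slim (ph \<circ> u)) (ph c) = rcls T' (MII T') (slim (ph \<circ> w)) (ph d)"
proof -
  obtain S x0 V S' x0' W where fr: "frame T u S x0 V" and fr': "frame T' (ph \<circ> u) S' x0' W"
    using frames[OF u] by blast
  have wM: "approx_seq T (MII T) w" using w approx_mono NsubM by blast
  obtain S2 x2 V2 where frw: "frame T w S2 x2 V2" using frame_exists[OF T wM] by blast
  have cM: "c \<in> MII T" and dM: "d \<in> MII T" using NM c d by auto
  obtain e where e: "placed S x0 c e" using oc occ_Lu_iff[OF Tn cM] frameD(6)[OF fr] by auto
  obtain ed where ed: "placed S2 x2 d ed" using od occ_Lu_iff[OF Tn dM] frameD(6)[OF frw] by auto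
  have "(ptclass (S2,x2), d) \<in> rcls T N (ptclass (S2,x2)) d" using rcls_refl[OF Tn NsubM d ed] .
  then have "(slim w, d) \<in> rcls T N (slim u) c" using eq frameD(6)[OF frw] by simp
  then have sw: "slim w = slim u" and "(ptclass (S,x0), d) \<in> rcls T N (ptclass (S,x0)) c"
    using frameD(6)[OF fr] unfolding rcls_mem by auto
  then have pd: "placed S x0 d e"
    using rcls_char[OF T NsubM fr uM_all[OF u] cM e] by auto
  obtain E where E: "placed S' x0' (ph c) E" "placed S' x0' (ph d) E" using core[OF u fr fr' c d e pd] by blast
  have s': "slim (ph \<circ> w) = slim (ph \<circ> u)" using slim_indep[OF w u sw] .
  have M': "MII T' \<subseteq> MII T'" by blast
  show ?thesis
    unfolding s' frameD(6)[OF fr']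
    using rcls_char[OF T' M' fr' phuM_all[OF u] phM'[OF c] E(1)] rcls_char[OF T' M' fr' phuM_all[OF u] phM'[OF d] E(2)]
    by simp
qed

definition phi where
  "phi g = (SOME k. \<exists>u c. approx_seq T N u \<and> c \<in> N \<and> slim u \<in> OmegaN T N \<and> occ (Lu T c) (slim u) \<and>
      g = rcls T N (slim u) c \<and> k = rcls T' (MII T') (slim (ph \<circ> u)) (ph c))"

lemma phi_eq:
  assumes u: "approx_seq T N u" and c: "c \<in> N" and om: "slim u \<in> OmegaN T N" and oc: "occ (Lu T c) (slim u)"
  shows "phi (rcls T N (slim u) c) = rcls T' (MII T') (slim (ph \<circ> u)) (ph c)"
  unfolding phi_def
proof (rule someI2)
  show "\<exists>u' c'. approx_seq T N u' \<and> c' \<in> N \<and> slim u' \<in> OmegaN T N \<and> occ (Lu T c') (slim u') \<and>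
      rcls T N (slim u) c = rcls T N (slim u') c' \<and>
      rcls T' (MII T') (slim (ph \<circ> u)) (ph c) = rcls T' (MII T') (slim (ph \<circ> u')) (ph c')"
    using u c om oc by blast
next
  fix k assume "\<exists>u' c'. approx_seq T N u' \<and> c' \<in> N \<and> slim u' \<in> OmegaN T N \<and> occ (Lu T c') (slim u') \<and>
      rcls T N (slim u) c = rcls T N (slim u') c' \<and> k = rcls T' (MII T') (slim (ph \<circ> u')) (ph c')"
  then obtain u' c' where h: "approx_seq T N u'" "c' \<in> N" "occ (Lu T c') (slim u')"
      "rcls T N (slim u) c = rcls T N (slim u') c'" "k = rcls T' (MII T') (slim (ph \<circ> u')) (ph c')" by blast
  show "k = rcls T' (MII T') (slim (ph \<circ> u)) (ph c)" using wd[OF u h(1) c h(2) oc h(3) h(4)] h(5) by simp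
qed

lemma clause1:
  assumes u: "approx_seq T N u" and c: "c \<in> N" and om: "slim u \<in> OmegaN T N" and oc: "occ (Lu T c) (slim u)"
  shows "approx_seq T' (MII T') (ph \<circ> u) \<and> slim (ph \<circ> u) \<in> Omega T' \<and>
        occ (Lu T' (ph c)) (slim (ph \<circ> u)) \<and>
        phi (rcls T N (slim u) c) = rcls T' (MII T') (slim (ph \<circ> u)) (ph c)"
proof -
  obtain S x0 V S' x0' W where fr: "frame T u S x0 V" and fr': "frame T' (ph \<circ> u) S' x0' W"
    using frames[OF u] by blast
  have cM: "c \<in> MII T" using NM c by blast
  obtain e where e: "placed S x0 c e" using oc occ_Lu_iff[OF Tn cM] frameD(6)[OF fr] by auto
  obtain E where E: "placed S' x0' (ph c) E" using core1[OF u fr fr' c e] by blast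
  have "occ (Lu T' (ph c)) (ptclass (S',x0'))" using iffD2[OF occ_Lu_iff[OF T'n phM'[OF c]]] E by blast
  then have "occ (Lu T' (ph c)) (slim (ph \<circ> u))" using frameD(6)[OF fr'] by simp
  moreover have "slim (ph \<circ> u) \<in> Omega T'" using frameD(6,8)[OF fr'] by simp
  ultimately show ?thesis using ph_approx[OF u] phi_eq[OF u c om oc] by blast
qed

lemma approx_for: "\<omega> \<in> OmegaN T N \<Longrightarrow> \<exists>u. approx_seq T N u \<and> slim u = \<omega>"
  using appr unfolding approximating_def by blast

lemma clause2:
  assumes g: "g \<in> Rset T N (OmegaN T N)"
  shows "phi g \<in> Rset T' (MII T') (Omega T')"
proof -
  from g obtain p where p: "p \<in> Rdom T N (OmegaN T N)" "g = (\<lambda>(x,y). rcls T N x y) p"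
    unfolding Rset_def by blast
  obtain \<omega> c where "p = (\<omega>,c)" by (cases p)
  then have oc: "(\<omega>,c) \<in> Rdom T N (OmegaN T N)" "g = rcls T N \<omega> c" using p by auto
  have h: "\<omega> \<in> OmegaN T N" "c \<in> N" "occ (Lu T c) \<omega>" using oc(1) unfolding Rdom_def by auto
  obtain u where u: "approx_seq T N u" "slim u = \<omega>" using approx_for[OF h(1)] by blast
  have cl: "approx_seq T' (MII T') (ph \<circ> u) \<and> slim (ph \<circ> u) \<in> Omega T' \<and>
        occ (Lu T' (ph c)) (slim (ph \<circ> u)) \<and>
        phi (rcls T N (slim u) c) = rcls T' (MII T') (slim (ph \<circ> u)) (ph c)"
    using clause1[OF u(1) h(2)] u(2) h by simp
  have "(slim (ph \<circ> u), ph c) \<in> Rdom T' (MII T') (Omega T')"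
    unfolding Rdom_def using cl phM'[OF h(2)] by blast
  then show ?thesis unfolding Rset_def using cl oc(2) u(2) by force
qed

lemma clause3:
  assumes rc: "rcomp T N (OmegaN T N) g h"
  shows "rcomp T' (MII T') (Omega T') (phi g) (phi h) \<and>
        phi (rmult T N (OmegaN T N) g h) = rmult T' (MII T') (Omega T') (phi g) (phi h)"
proof -
  obtain \<omega> c c' where w: "(\<omega>,c) \<in> Rdom T N (OmegaN T N)" "(act \<omega> c, c') \<in> Rdom T N (OmegaN T N)"
    "composable T c c'" "g = rcls T N \<omega> c" "h = rcls T N (act \<omega> c) c'"
    using rc unfolding rcomp_def by blast
  have h1: "\<omega> \<in> OmegaN T N" "c \<in> N" "occ (Lu T c) \<omega>" using w(1) unfolding Rdom_def by auto
  have h2: "act \<omega> c \<in> OmegaN T N" "c' \<in> N" "occ (Lu T c') (act \<omega> c)" using w(2) unfolding Rdom_def by auto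
  obtain u where u: "approx_seq T N u" "slim u = \<omega>" using approx_for[OF h1(1)] by blast
  obtain S x0 V S' x0' W where fr: "frame T u S x0 V" and fr': "frame T' (ph \<circ> u) S' x0' W"
    using frames[OF u(1)] by blast
  have om: "\<omega> = ptclass (S,x0)" using u(2) frameD(6)[OF fr] by simp
  have cM: "c \<in> MII T" "c' \<in> MII T" using NM h1 h2 by auto
  obtain e where e: "placed S x0 c e" using h1(3) occ_Lu_iff[OF Tn cM(1)] om by auto
  have act: "act \<omega> c = ptclass (S,e)" using act_eq[OF Tn cM(1) e] om by simp
  obtain e' where e': "placed S e c' e'" using h2(3) occ_Lu_iff[OF Tn cM(2)] act by auto
  obtain u2 where u2: "approx_seq T N u2" "slim u2 = act \<omega> c" using approx_for[OF h2(1)] by blast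
  obtain E where E: "placed S' x0' (ph c) E" using core1[OF u(1) fr fr' h1(2) e] by blast
  have s2: "slim (ph \<circ> u2) = ptclass (S',E)" using act_lemma[OF u(1) fr fr' h1(2) e E u2(1)] u2(2) act by simp
  have act': "act (ptclass (S',x0')) (ph c) = ptclass (S',E)" using act_eq[OF T'n phM'[OF h1(2)] E] .
  have c1: "approx_seq T' (MII T') (ph \<circ> u) \<and> slim (ph \<circ> u) \<in> Omega T' \<and>
        occ (Lu T' (ph c)) (slim (ph \<circ> u)) \<and>
        phi (rcls T N (slim u) c) = rcls T' (MII T') (slim (ph \<circ> u)) (ph c)"
    using clause1[OF u(1) h1(2)] u(2) h1 by simp
  have c2: "approx_seq T' (MII T') (ph \<circ> u2) \<and> slim (ph \<circ> u2) \<in> Omega T' \<and>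
        occ (Lu T' (ph c')) (slim (ph \<circ> u2)) \<and>
        phi (rcls T N (slim u2) c') = rcls T' (MII T') (slim (ph \<circ> u2)) (ph c')"
    using clause1[OF u2(1) h2(2)] u2(2) h2 by simp
  have sl: "slim (ph \<circ> u) = ptclass (S',x0')" using frameD(6)[OF fr'] .
  have pg: "phi g = rcls T' (MII T') (ptclass (S',x0')) (ph c)" using c1 w(4) u(2) sl by simp
  have phh: "phi h = rcls T' (MII T') (act (ptclass (S',x0')) (ph c)) (ph c')"
    using c2 w(5) u2(2) s2 act' by simp
  have W1: "(ptclass (S',x0'), ph c) \<in> Rdom T' (MII T') (Omega T')"
    unfolding Rdom_def using c1 sl phM'[OF h1(2)] by auto
  have W2: "(act (ptclass (S',x0')) (ph c), ph c') \<in> Rdom T' (MII T') (Omega T')"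
    unfolding Rdom_def using c2 s2 act' phM'[OF h2(2)] by auto
  have comp': "composable T' (ph c) (ph c')" using phcomp h1(2) h2(2) w(3) by blast
  have rc': "rcomp T' (MII T') (Omega T') (phi g) (phi h)"
    unfolding rcomp_def using W1 W2 comp' pg phh by blast
  have Acl: "\<forall>c\<in>N. \<forall>c'\<in>N. composable T c c' \<longrightarrow> dmult T c c' \<in> N" using Nmult by blast
  have Acl': "\<forall>c\<in>MII T'. \<forall>c'\<in>MII T'. composable T' c c' \<longrightarrow> dmult T' c c' \<in> MII T'"
    using dmult_MII[OF T'n] by blast
  have M': "MII T' \<subseteq> MII T'" by blast
  have w1: "(ptclass (S,x0), c) \<in> Rdom T N (OmegaN T N)" using w(1) om by simp
  have w2: "(act (ptclass (S,x0)) c, c') \<in> Rdom T N (OmegaN T N)" using w(2) om by simp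
  have rm: "rmult T N (OmegaN T N) g h = rcls T N \<omega> (dmult T c c')"
    using rmult_eq[OF T NsubM Acl OmN_ptclass fr uM_all[OF u(1)] w1 w2 w(3)] w(4,5) om by simp
  have rm': "rmult T' (MII T') (Omega T') (phi g) (phi h) = rcls T' (MII T') (ptclass (S',x0')) (dmult T' (ph c) (ph c'))"
    using rmult_eq[OF T' M' Acl' Omega'_ptclass fr' phuM_all[OF u(1)] W1 W2 comp'] pg phh by simp
  have ccN: "dmult T c c' \<in> N" using Nmult[OF h1(2) h2(2) w(3)] .
  have pcc: "placed S x0 (dmult T c c') e'" using placed_prod[OF Tn cM w(3) e e'] .
  have "occ (Lu T (dmult T c c')) (ptclass (S,x0))" using iffD2[OF occ_Lu_iff[OF Tn NM[OF ccN]]] pcc by blast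
  then have occc: "occ (Lu T (dmult T c c')) (slim u)" using u(2) om by simp
  have pr: "phi (rmult T N (OmegaN T N) g h) = rcls T' (MII T') (ptclass (S',x0')) (ph (dmult T c c'))"
    using rm phi_eq[OF u(1) ccN _ occc] u(2) h1(1) sl by simp
  obtain E'' where E'': "placed S' E (ph c') E''"
    using c2 occ_Lu_iff[OF T'n phM'[OF h2(2)]] s2 by auto
  have pp: "placed S' x0' (dmult T' (ph c) (ph c')) E''"
    using placed_prod[OF T'n phM'[OF h1(2)] phM'[OF h2(2)] comp' E E''] .
  obtain X where X: "placed S' x0' (ph (dmult T c c')) X" using core1[OF u(1) fr fr' ccN pcc] by blast
  have ppM: "dmult T' (ph c) (ph c') \<in> MII T'" using dmult_MII[OF T'n phM'[OF h1(2)] phM'[OF h2(2)] comp'] .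
  have "dle (dmult T' (ph c) (ph c')) (ph (dmult T c c'))" using phmult h1(2) h2(2) w(3) by blast
  then have "placed S' x0' (dmult T' (ph c) (ph c')) X" using dle_placed2[OF ppM phM'[OF ccN] _ X] by blast
  then have "X = E''" using placed_unique[OF T'n ppM pp] by blast
  then have "rcls T' (MII T') (ptclass (S',x0')) (ph (dmult T c c')) =
             rcls T' (MII T') (ptclass (S',x0')) (dmult T' (ph c) (ph c'))"
    using rcls_char[OF T' M' fr' phuM_all[OF u(1)] phM'[OF ccN] X] rcls_char[OF T' M' fr' phuM_all[OF u(1)] ppM pp]
    by simp
  then show ?thesis using rc' pr rm' by simp
qed

end


context MT begin

lemma clause4:
  assumes c': "c' \<in> MII T'"
  shows "RN_open T N {g\<in>Rset T N (OmegaN T N). phi g \<in> Vgen T' c'}"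
proof -
  define Wg where "Wg = {g\<in>Rset T N (OmegaN T N). phi g \<in> Vgen T' c'}"
  define D where "D = {p \<in> Rdom T N (OmegaN T N). rcls T N (fst p) (snd p) \<in> Wg}"
  have M': "MII T' \<subseteq> MII T'" by blast
  have main: "\<exists>Sop. Omega_open T Sop \<and> \<omega> \<in> Sop \<and> (\<forall>\<omega>1\<in>Sop. (\<omega>1,c) \<in> Rdom T N (OmegaN T N) \<longrightarrow> (\<omega>1,c) \<in> D)"
    if oc: "(\<omega>,c) \<in> D" for \<omega> c
  proof -
    have rd: "(\<omega>,c) \<in> Rdom T N (OmegaN T N)" and inW: "rcls T N \<omega> c \<in> Wg" using oc unfolding D_def by auto
    have h: "\<omega> \<in> OmegaN T N" "c \<in> N" "occ (Lu T c) \<omega>" using rd unfolding Rdom_def by auto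
    have cM: "c \<in> MII T" using NM h(2) by blast
    obtain u where u: "approx_seq T N u" "slim u = \<omega>" using approx_for[OF h(1)] by blast
    obtain S x0 V S' x0' W where fr: "frame T u S x0 V" and fr': "frame T' (ph \<circ> u) S' x0' W"
      using frames[OF u(1)] by blast
    have om: "\<omega> = ptclass (S,x0)" using u(2) frameD(6)[OF fr] by simp
    have sl: "slim (ph \<circ> u) = ptclass (S',x0')" using frameD(6)[OF fr'] .
    obtain e where e: "placed S x0 c e" using h(3) occ_Lu_iff[OF Tn cM] om by auto
    obtain E where E: "placed S' x0' (ph c) E" using core1[OF u(1) fr fr' h(2) e] by blast
    have pv: "phi (rcls T N \<omega> c) = rcls T' (MII T') (ptclass (S',x0')) (ph c)"
      using phi_eq[OF u(1) h(2)] u(2) h sl by simp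
    have "phi (rcls T N \<omega> c) \<in> Vgen T' c'" using inW unfolding Wg_def by blast
    then obtain \<omega>2 where o2: "rcls T' (MII T') (ptclass (S',x0')) (ph c) = rcls T' (MII T') \<omega>2 c'"
      "\<omega>2 \<in> Omega T'" "occ (Lu T' c') \<omega>2"
      unfolding Vgen_def pv by blast
    obtain S2 p2 where S2: "\<omega>2 = ptclass (S2,p2)" using Omega_ptclass[OF o2(2)] by blast
    obtain e2 where e2: "placed S2 p2 c' e2" using o2(3) occ_Lu_iff[OF T'n c'] S2 by auto
    have "(\<omega>2, c') \<in> rcls T' (MII T') \<omega>2 c'" using rcls_refl[OF T'n M' c' e2] S2 by simp
    then have "(\<omega>2, c') \<in> rcls T' (MII T') (ptclass (S',x0')) (ph c)" using o2(1) by simp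
    then have q: "\<omega>2 = ptclass (S',x0')" "occ (Lu T' c') (ptclass (S',x0'))"
      "requiv T' (ptclass (S',x0')) (ph c) c'" unfolding rcls_mem by auto
    obtain E' where E': "placed S' x0' c' E'" using q(2) occ_Lu_iff[OF T'n c'] by blast
    have "E = E'" using requiv_end[OF T'n phM'[OF h(2)] c' E E' q(3)] .
    obtain Kc where Kc: "(Kc,x0,e) \<in> c" "Kc \<subseteq> S" using e placed_def by blast
    obtain Kc' where Kc': "(Kc',x0',E) \<in> c'" "Kc' \<subseteq> S'" using E' \<open>E = E'\<close> placed_def by blast
    have finc: "finite Kc" using MII_member[OF cM Kc(1)] goodpat_def by blast
    have finc': "finite Kc'" using MII_member[OF c' Kc'(1)] goodpat_def by blast
    have ev: "\<forall>\<^sub>F n in sequentially. Kc \<subseteq> V n \<and> Kc' \<subseteq> W n"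
      using eventually_conj[OF frameD(9)[OF fr finc Kc(2)] frameD(9)[OF fr' finc' Kc'(2)]] .
    obtain n where n: "Kc \<subseteq> V n" "Kc' \<subseteq> W n" using eventually_happens'[OF sequentially_bot ev] by blast
    define w where "w = u n"
    have wN: "w \<in> N" unfolding w_def using approx_seqD(1)[OF u(1)] .
    have wM: "w \<in> MII T" using NM wN by blast
    have Vn: "(V n, x0, x0) \<in> w" unfolding w_def using frameD(4)[OF fr] .
    have Wn: "(W n, x0', x0') \<in> ph w" unfolding w_def using frameD(4)[OF fr'] by simp
    obtain Pf E1 where A1: "(Pf,x0',E1) \<in> ph (dmult T w c)" "Pf \<subseteq> W n" "placed Pf x0' (ph c) E1"
      using ALG[OF wN h(2) Vn Kc(1) n(1) Wn] by blast
    have fN: "dmult T w c \<in> N" using ALG[OF wN h(2) Vn Kc(1) n(1) Wn] by blast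
    have "Pf \<subseteq> S'" using A1(2) frameD(5)[OF fr'] by blast
    then have "placed S' x0' (ph c) E1" using A1(3) placed_mono by blast
    then have "E1 = E" using placed_unique[OF T'n phM'[OF h(2)] E] by blast
    have wK: "w = dpclass (V n, x0, x0)" using MII_member[OF wM Vn] by blast
    have phwK: "ph w = dpclass (W n, x0', x0')" using MII_member[OF phM'[OF wN] Wn] by blast
    show ?thesis
    proof (intro exI[of _ "UU T w"] conjI ballI impI)
      show "Omega_open T (UU T w)" using UU_open[OF T wM] .
      have "occ w (ptclass (S,x0))" using iffD2[OF occ_iff[OF wM]] Vn frameD(5)[OF fr] unfolding placed_def by blast
      then show "\<omega> \<in> UU T w" unfolding UU_def using om h(1) OmN_Omega by blast
    next
      fix \<omega>1 assume o1: "\<omega>1 \<in> UU T w" "(\<omega>1,c) \<in> Rdom T N (OmegaN T N)"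
      have h1: "\<omega>1 \<in> OmegaN T N" "occ (Lu T c) \<omega>1" "occ w \<omega>1" using o1 unfolding Rdom_def UU_def by auto
      obtain u1 where u1: "approx_seq T N u1" "slim u1 = \<omega>1" using approx_for[OF h1(1)] by blast
      obtain S1 x1 V1 S1' x1' W1 where fr1: "frame T u1 S1 x1 V1" and fr1': "frame T' (ph \<circ> u1) S1' x1' W1"
        using frames[OF u1(1)] by blast
      have om1: "\<omega>1 = ptclass (S1,x1)" using u1(2) frameD(6)[OF fr1] by simp
      have sl1: "slim (ph \<circ> u1) = ptclass (S1',x1')" using frameD(6)[OF fr1'] .
      have "placed S1 x1 w x1" using iffD1[OF occ_iff[OF wM]] h1(3) om1 by blast
      then obtain Kw1 where Kw1: "(Kw1,x1,x1) \<in> w" "Kw1 \<subseteq> S1" unfolding placed_def by blast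
      obtain d where d: "Kw1 = pat_tr d (V n)" "x1 = tile_tr d x0" using Kw1(1) wK mem_dpclass by blast
      have Kc1: "(pat_tr d Kc, x1, tile_tr d e) \<in> c" using MII_tr_closed[OF cM Kc(1)] d(2) by blast
      have Kc1s: "pat_tr d Kc \<subseteq> Kw1" using d(1) pat_tr_mono[OF n(1)] by blast
      have pw1: "placed S1 x1 w x1" using Kw1 placed_def by blast
      obtain X where X: "placed S1' x1' (ph w) X" using core1[OF u1(1) fr1 fr1' wN pw1] by blast
      have "X = x1'" using ph_unit_end[OF wN _ X] approx_seqD(2)[OF u(1)] w_def by blast
      then obtain Pw1 where Pw1: "(Pw1,x1',x1') \<in> ph w" "Pw1 \<subseteq> S1'" using X placed_def by blast
      obtain dl where dl: "Pw1 = pat_tr dl (W n)" "x1' = tile_tr dl x0'" using Pw1(1) phwK mem_dpclass by blast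
      obtain Pf1 E2 where A2: "(Pf1,x1',E2) \<in> ph (dmult T w c)" "Pf1 \<subseteq> Pw1" "placed Pf1 x1' (ph c) E2"
        using ALG[OF wN h(2) Kw1(1) Kc1 Kc1s Pw1(1)] by blast
      have "(pat_tr dl Pf, x1', tile_tr dl E) \<in> ph (dmult T w c)"
        using MII_tr_closed[OF phM'[OF fN] A1(1)] dl(2) \<open>E1 = E\<close> by blast
      moreover have "pat_tr dl Pf \<subseteq> S1'" using pat_tr_mono[OF A1(2)] dl(1) Pw1(2) by blast
      ultimately have pf1: "placed S1' x1' (ph (dmult T w c)) (tile_tr dl E)" unfolding placed_def by blast
      have "placed S1' x1' (ph (dmult T w c)) E2" using A2(1,2) Pw1(2) unfolding placed_def by blast
      then have "E2 = tile_tr dl E" using placed_unique[OF T'n phM'[OF fN] pf1] by blast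
      moreover have "Pf1 \<subseteq> S1'" using A2(2) Pw1(2) by blast
      ultimately have pc1: "placed S1' x1' (ph c) (tile_tr dl E)" using A2(3) placed_mono by metis
      have "(pat_tr dl Kc', x1', tile_tr dl E) \<in> c'" using MII_tr_closed[OF c' Kc'(1)] dl(2) by blast
      moreover have "pat_tr dl Kc' \<subseteq> S1'" using pat_tr_mono[OF n(2)] dl(1) Pw1(2) by blast
      ultimately have pc1': "placed S1' x1' c' (tile_tr dl E)" unfolding placed_def by blast
      have pv1: "phi (rcls T N \<omega>1 c) = rcls T' (MII T') (ptclass (S1',x1')) (ph c)"
        using phi_eq[OF u1(1) h(2)] u1(2) h1 sl1 by simp
      also have "\<dots> = rcls T' (MII T') (ptclass (S1',x1')) c'"
        using rcls_char[OF T' M' fr1' phuM_all[OF u1(1)] phM'[OF h(2)] pc1]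
          rcls_char[OF T' M' fr1' phuM_all[OF u1(1)] c' pc1'] by simp
      finally have pv2: "phi (rcls T N \<omega>1 c) = rcls T' (MII T') (ptclass (S1',x1')) c'" .
      have "occ (Lu T' c') (ptclass (S1',x1'))" using iffD2[OF occ_Lu_iff[OF T'n c']] pc1' by blast
      moreover have "ptclass (S1',x1') \<in> Omega T'" using frameD(8)[OF fr1'] .
      ultimately have "phi (rcls T N \<omega>1 c) \<in> Vgen T' c'" unfolding Vgen_def pv2 by blast
      moreover have "rcls T N \<omega>1 c \<in> Rset T N (OmegaN T N)" unfolding Rset_def using o1(2) by force
      ultimately show "(\<omega>1,c) \<in> D" unfolding D_def Wg_def using o1(2) by simp
    qed
  qed
  have "dom_open T N (OmegaN T N) D"
    unfolding dom_open_def
  proof (intro conjI ballI)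
    show "D \<subseteq> Rdom T N (OmegaN T N)" unfolding D_def by blast
  next
    fix p assume "p \<in> D"
    obtain \<omega> c where p: "p = (\<omega>,c)" by (cases p)
    show "case p of (\<omega>, c) \<Rightarrow> \<exists>S. Omega_open T S \<and> \<omega> \<in> S \<and>
          (\<forall>\<omega>'\<in>S. (\<omega>', c) \<in> Rdom T N (OmegaN T N) \<longrightarrow> (\<omega>', c) \<in> D)"
      using main[of \<omega> c] \<open>p \<in> D\<close> p by simp
  qed
  moreover have "Wg \<subseteq> Rset T N (OmegaN T N)" unfolding Wg_def by blast
  ultimately have "RN_open T N Wg" unfolding RN_open_def D_def by (intro conjI)
  then show ?thesis unfolding Wg_def .
qed

lemma main_exists:
  "\<exists>\<phi>.
     (\<forall>u c. approx_seq T N u \<and> c \<in> N \<and> slim u \<in> OmegaN T N \<and> occ (Lu T c) (slim u) \<longrightarrow>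
        approx_seq T' (MII T') (ph \<circ> u) \<and> slim (ph \<circ> u) \<in> Omega T' \<and>
        occ (Lu T' (ph c)) (slim (ph \<circ> u)) \<and>
        \<phi> (rcls T N (slim u) c) = rcls T' (MII T') (slim (ph \<circ> u)) (ph c)) \<and>
     (\<forall>g\<in>Rset T N (OmegaN T N). \<phi> g \<in> Rset T' (MII T') (Omega T')) \<and>
     (\<forall>g\<in>Rset T N (OmegaN T N). \<forall>h\<in>Rset T N (OmegaN T N). rcomp T N (OmegaN T N) g h \<longrightarrow>
        rcomp T' (MII T') (Omega T') (\<phi> g) (\<phi> h) \<and>
        \<phi> (rmult T N (OmegaN T N) g h) = rmult T' (MII T') (Omega T') (\<phi> g) (\<phi> h)) \<and>
     (\<forall>c'\<in>MII T'. RN_open T N {g\<in>Rset T N (OmegaN T N). \<phi> g \<in> Vgen T' c'})"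
proof -
  have A: "\<forall>u c. approx_seq T N u \<and> c \<in> N \<and> slim u \<in> OmegaN T N \<and> occ (Lu T c) (slim u) \<longrightarrow>
        approx_seq T' (MII T') (ph \<circ> u) \<and> slim (ph \<circ> u) \<in> Omega T' \<and>
        occ (Lu T' (ph c)) (slim (ph \<circ> u)) \<and>
        phi (rcls T N (slim u) c) = rcls T' (MII T') (slim (ph \<circ> u)) (ph c)"
    using clause1 by blast
  have B: "\<forall>g\<in>Rset T N (OmegaN T N). phi g \<in> Rset T' (MII T') (Omega T')" using clause2 by blast
  have C: "\<forall>g\<in>Rset T N (OmegaN T N). \<forall>h\<in>Rset T N (OmegaN T N). rcomp T N (OmegaN T N) g h \<longrightarrow>
        rcomp T' (MII T') (Omega T') (phi g) (phi h) \<and>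
        phi (rmult T N (OmegaN T N) g h) = rmult T' (MII T') (Omega T') (phi g) (phi h)"
    using clause3 by blast
  have D: "\<forall>c'\<in>MII T'. RN_open T N {g\<in>Rset T N (OmegaN T N). phi g \<in> Vgen T' c'}" using clause4 by blast
  show ?thesis
    apply (rule exI[where x = phi])
    by (rule conjI[OF A conjI[OF B conjI[OF C D]]])
qed

end

theorem mainTheorem8:
  fixes T :: "('n::finite,'l) tile set" and T' :: "('m::finite,'k) tile set"
    and N :: "('n,'l) dpat set set"
    and phihat :: "('n,'l) dpat set \<Rightarrow> ('m,'k) dpat set"
  assumes "is_tiling T" and "is_tiling T'"
    and "sub_almost_groupoid T N" and "approximating T N"
    and "\<forall>c\<in>N. phihat c \<in> MII T'"
    and "\<forall>c\<in>N. \<forall>c'\<in>N. composable T c c' \<longrightarrow> composable T' (phihat c) (phihat c')"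
    and "\<forall>c\<in>N. phihat (dinv c) = dinv (phihat c)"
    and "\<forall>c\<in>N. \<forall>c'\<in>N. composable T c c' \<longrightarrow>
           dle (dmult T' (phihat c) (phihat c')) (phihat (dmult T c c'))"
    and "\<exists>t>0. \<exists>B. \<forall>u\<in>N. is_unit T u \<longrightarrow> \<bar>rad (phihat u) - t * rad u\<bar> \<le> B"
  shows "\<exists>\<phi>.
     (\<forall>u c. approx_seq T N u \<and> c \<in> N \<and> slim u \<in> OmegaN T N \<and> occ (Lu T c) (slim u) \<longrightarrow>
        approx_seq T' (MII T') (phihat \<circ> u) \<and> slim (phihat \<circ> u) \<in> Omega T' \<and>
        occ (Lu T' (phihat c)) (slim (phihat \<circ> u)) \<and>
        \<phi> (rcls T N (slim u) c) = rcls T' (MII T') (slim (phihat \<circ> u)) (phihat c)) \<and>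
     (\<forall>g\<in>Rset T N (OmegaN T N). \<phi> g \<in> Rset T' (MII T') (Omega T')) \<and>
     (\<forall>g\<in>Rset T N (OmegaN T N). \<forall>h\<in>Rset T N (OmegaN T N). rcomp T N (OmegaN T N) g h \<longrightarrow>
        rcomp T' (MII T') (Omega T') (\<phi> g) (\<phi> h) \<and>
        \<phi> (rmult T N (OmegaN T N) g h) = rmult T' (MII T') (Omega T') (\<phi> g) (\<phi> h)) \<and>
     (\<forall>c'\<in>MII T'. RN_open T N {g\<in>Rset T N (OmegaN T N). \<phi> g \<in> Vgen T' c'})"
proof -
  interpret MT T T' N phihat using assms by unfold_locales
  show ?thesis by (rule main_exists)
qed


end
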